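(* Let $S=(-1,1)^2$, let $W\ge 1$ be an integer, and let $$u(\xi,\eta)=\sum_{i=0}^{W}\sum_{j=0}^{W}a_{i,j}L_i(\xi)L_j(\eta),$$ where $a_{i,j}$ are real coefficients and $L_i$ denotes the Legendre polynomial of degree $i$. Then there exists an extension $U=Eu$ of $u$, i.e. a function $U$ on $\mathbb{R}^2$ with $U|_S=u$, such that $U\in H^4(\mathbb{R}^2)$ and $$\int_{\mathbb{R}^2}\left(U_{\xi\xi\xi\xi}^2+U_{\eta\eta\eta\eta}^2+U_{\xi\xi}^2+U_{\eta\eta}^2+U^2\right)d\xi\,d\eta\le K\int_{S}\left(u_{\xi\xi\xi\xi}^2+u_{\eta\eta\eta\eta}^2+u_{\xi\xi}^2+u_{\eta\eta}^2+u^2\right)d\xi\,d\eta,$$ where $K$ is a constant independent of $W$ (and of $u$).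
   Context: Subscripts denote partial derivatives, e.g. $u_{\xi\xi}=\partial^2u/\partial\xi^2$. $H^4(\mathbb{R}^2)$ is the usual Sobolev space of functions whose weak derivatives up to order $4$ lie in $L^2(\mathbb{R}^2)$. *)

theory Defs
  imports "HOL-Analysis.Analysis" "HOL-Computational_Algebra.Polynomial"
begin

text \<open>Standard Legendre polynomials via Bonnet's recurrence:
  P_0 = 1, P_1 = x, (n+2) P_{n+2} = (2n+3) x P_{n+1} - (n+1) P_n.\<close>
fun legendre :: "nat \<Rightarrow> real poly" where
  "legendre 0 = 1"
| "legendre (Suc 0) = [:0, 1:]"
| "legendre (Suc (Suc n)) =
     smult (1 / (real n + 2))
       (smult (2 * real n + 3) ([:0, 1:] * legendre (Suc n)) - smult (real n + 1) (legendre n))"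

definition S :: "(real \<times> real) set" where
  "S = {-1<..<1} \<times> {-1<..<1}"

definition leg_u :: "nat \<Rightarrow> (nat \<Rightarrow> nat \<Rightarrow> real) \<Rightarrow> real \<times> real \<Rightarrow> real" where
  "leg_u W a = (\<lambda>(\<xi>, \<eta>). \<Sum>i\<le>W. \<Sum>j\<le>W. a i j * poly (legendre i) \<xi> * poly (legendre j) \<eta>)"

section \<open>Classical partial derivatives (True = \<xi>-direction, False = \<eta>-direction)\<close>

definition dpar :: "bool \<Rightarrow> (real \<times> real \<Rightarrow> real) \<Rightarrow> real \<times> real \<Rightarrow> real" where
  "dpar d f = (\<lambda>(x, y). if d then deriv (\<lambda>t. f (t, y)) x else deriv (\<lambda>t. f (x, t)) y)"

fun dpars :: "bool list \<Rightarrow> (real \<times> real \<Rightarrow> real) \<Rightarrow> real \<times> real \<Rightarrow> real" where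
  "dpars [] f = f"
| "dpars (d # ds) f = dpar d (dpars ds f)"

definition test_fun :: "(real \<times> real \<Rightarrow> real) \<Rightarrow> bool" where
  "test_fun \<phi> \<longleftrightarrow>
     bounded {z. \<phi> z \<noteq> 0} \<and>
     (\<forall>ds. continuous_on UNIV (dpars ds \<phi>) \<and>
        (\<forall>x y. (\<lambda>t. dpars ds \<phi> (t, y)) differentiable (at x) \<and>
               (\<lambda>t. dpars ds \<phi> (x, t)) differentiable (at y)))"

definition weak_pderiv :: "bool list \<Rightarrow> (real \<times> real \<Rightarrow> real) \<Rightarrow> (real \<times> real \<Rightarrow> real) \<Rightarrow> bool" where
  "weak_pderiv ds U g \<longleftrightarrow>
     (\<forall>\<phi>. test_fun \<phi> \<longrightarrow>
        (\<integral>z. U z * dpars ds \<phi> z \<partial>lborel) = (-1) ^ length ds * (\<integral>z. g z * \<phi> z \<partial>lborel))"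

definition L2 :: "(real \<times> real \<Rightarrow> real) \<Rightarrow> bool" where
  "L2 f \<longleftrightarrow> f \<in> borel_measurable lborel \<and> integrable lborel (\<lambda>z. (f z)\<^sup>2)"

definition H4 :: "(real \<times> real \<Rightarrow> real) \<Rightarrow> bool" where
  "H4 U \<longleftrightarrow> L2 U \<and> (\<forall>ds. length ds \<le> 4 \<longrightarrow> (\<exists>g. L2 g \<and> weak_pderiv ds U g))"

end

theory Submission
  imports Defs
begin


lemma glue:
  fixes f g f' g' :: "real \<Rightarrow> real"
  assumes df: "\<And>t. (f has_real_derivative f' t) (at t)"
      and dg: "\<And>t. (g has_real_derivative g' t) (at t)"
      and e0: "f x0 = g x0" and e1: "f' x0 = g' x0"
  shows "((\<lambda>t. if t \<le> x0 then f t else g t) has_real_derivative (if t \<le> x0 then f' t else g' t)) (at t)"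
proof -
  have cl: "closure {..x0} \<inter> closure {x0<..} = {x0}" by auto
  have UN: "{..x0} \<union> {x0<..} = (UNIV::real set)" by auto
  have "((\<lambda>t. if t \<in> {..x0} then f t else g t) has_derivative
      (if t \<in> {..x0} then (\<lambda>h. f' t * h) else (\<lambda>h. g' t * h))) (at t within ({..x0} \<union> {x0<..}))"
    apply (rule has_derivative_If_within_closures)
    using df dg e0 e1 unfolding cl
    by (auto simp: has_field_derivative_def intro: has_derivative_at_withinI)
  then show ?thesis unfolding UN has_field_derivative_def
    by (cases "t \<le> x0") auto
qed

lemma glue_cont:
  fixes f g :: "real \<Rightarrow> real"
  assumes "continuous_on UNIV f" "continuous_on UNIV g" "f x0 = g x0"
  shows "continuous_on UNIV (\<lambda>t. if t \<le> x0 then f t else g t)"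
proof -
  have "continuous_on ({..x0} \<union> {x0..}) (\<lambda>t. if t \<le> x0 then f t else g t)"
    apply (rule continuous_on_cases)
    using assms by (auto intro: continuous_on_subset)
  moreover have "{..x0} \<union> {x0..} = (UNIV::real set)" by auto
  ultimately show ?thesis by simp
qed

definition pw :: "real poly \<Rightarrow> real poly \<Rightarrow> real poly \<Rightarrow> real \<Rightarrow> real" where
  "pw p1 p2 p3 t = (if t \<le> -2 then 0 else if t \<le> -1 then poly p1 t else if t \<le> 1 then poly p2 t
     else if t \<le> 2 then poly p3 t else 0)"

definition matches :: "real poly \<Rightarrow> real poly \<Rightarrow> real poly \<Rightarrow> bool" where
  "matches p1 p2 p3 \<longleftrightarrow> poly p1 (-2) = 0 \<and> poly p1 (-1) = poly p2 (-1) \<and> poly p2 1 = poly p3 1 \<and> poly p3 2 = 0"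

lemma pw_deriv:
  assumes "matches p1 p2 p3" "matches (pderiv p1) (pderiv p2) (pderiv p3)"
  shows "(pw p1 p2 p3 has_real_derivative pw (pderiv p1) (pderiv p2) (pderiv p3) t) (at t)"
proof -
  note m = assms[unfolded matches_def]
  have d0: "\<And>t. ((\<lambda>t. 0::real) has_real_derivative 0) (at t)" by simp
  have dp: "\<And>p t. (poly p has_real_derivative poly (pderiv p) t) (at t)" by (rule poly_DERIV)
  have h3: "\<And>t. ((\<lambda>t. if t \<le> 2 then poly p3 t else 0) has_real_derivative
      (if t \<le> 2 then poly (pderiv p3) t else 0)) (at t)"
    by (rule glue[OF dp d0]) (use m in auto)
  have h2: "\<And>t. ((\<lambda>t. if t \<le> 1 then poly p2 t else (if t \<le> 2 then poly p3 t else 0)) has_real_derivative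
      (if t \<le> 1 then poly (pderiv p2) t else (if t \<le> 2 then poly (pderiv p3) t else 0))) (at t)"
    by (rule glue[OF dp h3]) (use m in auto)
  have h1: "\<And>t. ((\<lambda>t. if t \<le> -1 then poly p1 t else (if t \<le> 1 then poly p2 t else (if t \<le> 2 then poly p3 t else 0))) has_real_derivative
      (if t \<le> -1 then poly (pderiv p1) t else (if t \<le> 1 then poly (pderiv p2) t else (if t \<le> 2 then poly (pderiv p3) t else 0)))) (at t)"
    by (rule glue[OF dp h2]) (use m in auto)
  have h0: "\<And>t. ((\<lambda>t. if t \<le> -2 then 0 else (if t \<le> -1 then poly p1 t else (if t \<le> 1 then poly p2 t else (if t \<le> 2 then poly p3 t else 0)))) has_real_derivative
      (if t \<le> -2 then 0 else (if t \<le> -1 then poly (pderiv p1) t else (if t \<le> 1 then poly (pderiv p2) t else (if t \<le> 2 then poly (pderiv p3) t else 0))))) (at t)"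
    by (rule glue[OF d0 h1]) (use m in auto)
  show ?thesis using h0[of t] unfolding pw_def[abs_def] by simp
qed

lemma pw_cont:
  assumes "matches p1 p2 p3"
  shows "continuous_on UNIV (pw p1 p2 p3)"
proof -
  note m = assms[unfolded matches_def]
  have c0: "continuous_on UNIV (\<lambda>t::real. 0::real)" by simp
  have cp: "\<And>p::real poly. continuous_on UNIV (poly p)" using continuous_on_poly[of UNIV "\<lambda>x. x"] by simp
  have "continuous_on UNIV (\<lambda>t. if t \<le> 2 then poly p3 t else 0)"
    by (rule glue_cont[OF cp c0]) (use m in auto)
  then have "continuous_on UNIV (\<lambda>t. if t \<le> 1 then poly p2 t else (if t \<le> 2 then poly p3 t else 0))"
    by (rule glue_cont[OF cp]) (use m in auto)
  then have "continuous_on UNIV (\<lambda>t. if t \<le> -1 then poly p1 t else (if t \<le> 1 then poly p2 t else (if t \<le> 2 then poly p3 t else 0)))"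
    by (rule glue_cont[OF cp]) (use m in auto)
  then have "continuous_on UNIV (\<lambda>t. if t \<le> -2 then 0 else (if t \<le> -1 then poly p1 t else (if t \<le> 1 then poly p2 t else (if t \<le> 2 then poly p3 t else 0))))"
    by (rule glue_cont[OF c0]) (use m in auto)
  then show ?thesis unfolding pw_def[abs_def] by simp
qed



definition vz :: "nat \<Rightarrow> real poly \<Rightarrow> real \<Rightarrow> bool" where
  "vz n h c \<longleftrightarrow> (\<forall>m\<le>n. poly ((pderiv^^m) h) c = 0)"

lemma vz_0: "vz 0 h c \<longleftrightarrow> poly h c = 0"
  by (simp add: vz_def)

lemma vz_Suc: "vz (Suc n) h c \<longleftrightarrow> poly h c = 0 \<and> vz n (pderiv h) c"
proof
  assume "vz (Suc n) h c"
  then show "poly h c = 0 \<and> vz n (pderiv h) c"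
    unfolding vz_def by (metis Suc_le_mono funpow_0 funpow_Suc_right o_apply zero_le)
next
  assume a: "poly h c = 0 \<and> vz n (pderiv h) c"
  show "vz (Suc n) h c" unfolding vz_def
  proof (intro allI impI)
    fix m assume "m \<le> Suc n"
    then show "poly ((pderiv ^^ m) h) c = 0"
      using a unfolding vz_def by (cases m) (auto simp: funpow_Suc_right simp del: funpow.simps)
  qed
qed

lemma vz_mono: "vz n h c \<Longrightarrow> m \<le> n \<Longrightarrow> vz m h c"
  by (auto simp: vz_def)

lemma pderiv_funpow_add: "(pderiv^^m) (p + q) = (pderiv^^m) p + (pderiv^^m) q"
  by (induction m) (auto simp: pderiv_add)

lemma pderiv_funpow_diff: "(pderiv^^m) (p - q) = (pderiv^^m) p - (pderiv^^m) (q::real poly)"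
  by (induction m) (auto simp: pderiv_diff)

lemma pderiv_funpow_smult: "(pderiv^^m) (smult a p) = smult a ((pderiv^^m) p)"
  by (induction m) (auto simp: pderiv_smult)

lemma pderiv_funpow_0: "(pderiv^^m) 0 = 0"
  by (induction m) auto

lemma pderiv_funpow_sum: "(pderiv^^m) (sum g A) = (\<Sum>k\<in>A. (pderiv^^m) (g k))"
  by (induction A rule: infinite_finite_induct) (auto simp: pderiv_funpow_add pderiv_funpow_0)

lemma pcompose_pow: "pcompose (p^n) r = (pcompose p r)^n"
  by (induction n) (auto simp: pcompose_mult pcompose_1)

lemma vz_add: "vz n h c \<Longrightarrow> vz n r c \<Longrightarrow> vz n (h + r) c"
  by (auto simp: vz_def pderiv_funpow_add)

lemma vz_smult: "vz n h c \<Longrightarrow> vz n (smult a h) c"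
  by (auto simp: vz_def pderiv_funpow_smult)

lemma vz_mult: "vz n h c \<Longrightarrow> vz n (r * h) c"
proof (induction n arbitrary: r h)
  case 0 then show ?case by (simp add: vz_0)
next
  case (Suc n)
  have h0: "poly h c = 0" and hd: "vz n (pderiv h) c" using Suc.prems by (auto simp: vz_Suc)
  have hn: "vz n h c" using Suc.prems vz_mono by force
  have "vz n (r * pderiv h + h * pderiv r) c"
    using Suc.IH[OF hd, of r] Suc.IH[OF hn, of "pderiv r"] by (intro vz_add) (auto simp: mult.commute)
  then show ?case using h0 by (simp add: vz_Suc pderiv_mult)
qed

lemma vz_mult': "vz n h c \<Longrightarrow> vz n (h * r) c"
  using vz_mult[of n h c r] by (simp add: mult.commute)

lemma vz_pow: "vz n ([:-c,1:]^(Suc n)) c"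
proof (induction n)
  case 0 then show ?case by (simp add: vz_0)
next
  case (Suc n)
  have d1: "pderiv [:-c,1:] = 1" by (simp add: pderiv_pCons)
  have "pderiv ([:-c,1:]^(Suc (Suc n))) = smult (of_nat (Suc (Suc n))) ([:-c,1:]^(Suc n))"
    by (simp only: pderiv_power_Suc d1 mult_1_right)
  then show ?case using Suc.IH by (simp add: vz_Suc vz_smult)
qed

lemma vz_iff_evals: "vz n h c \<longleftrightarrow> (\<forall>m\<le>n. poly ((pderiv^^m) h) c = 0)"
  by (simp add: vz_def)

definition QQ :: "real poly" where
 "QQ = [:1,0,0,0,0,-126,420,-540,315,-70:]"

lemma pQQ: "pderiv QQ = smult (-630) ([:0,1:]^4 * [:1,-1:]^4)"
  unfolding QQ_def by (simp add: pderiv_pCons eval_nat_numeral)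

definition qR :: "real poly" where "qR = pcompose QQ [:-1,1:]"

lemma pderiv_pcompose_lin:
  "(pderiv^^m) (pcompose p [:a,b:]) = smult (b^m) (pcompose ((pderiv^^m) p) [:a,b:])"
proof (induction m)
  case 0 then show ?case by simp
next
  case (Suc m)
  show ?case using Suc
    by (simp add: pderiv_smult pderiv_pcompose pderiv_pCons mult.commute)
qed

lemma pqR: "pderiv qR = smult (-630) ([:-1,1:]^4 * [:-2,1:]^4)"
proof -
  have "pderiv qR = pcompose (pderiv QQ) [:-1,1:]"
    using pderiv_pcompose_lin[of 1 QQ "-1" 1] by (simp add: qR_def)
  also have "\<dots> = smult (-630) ([:-1,1:]^4 * [:2,-1:]^4)"
  proof -
    have a: "pcompose [:0,1:] [:-1,1:] = [:-1,1::real:]" by (simp add: pcompose_pCons)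
    have b: "pcompose [:1,-1:] [:-1,1:] = [:2,-1::real:]" by (simp add: pcompose_pCons)
    show ?thesis unfolding pQQ by (simp only: pcompose_smult pcompose_mult pcompose_pow a b)
  qed
  also have "[:2,-1:]^4 = ([:-2,1:]^4 :: real poly)"
  proof -
    have "[:2,-1:] = - [:-2,1::real:]" by simp
    then show ?thesis by (metis power_minus_even even_numeral)
  qed
  finally show ?thesis .
qed

lemma e4: "Suc 3 = (4::nat)" by simp

lemma vz_qR1: "vz 4 (qR - 1) 1"
proof -
  have "vz 3 ([:-1,1:]^4 * [:-2,1:]^4) 1"
    using vz_mult'[OF vz_pow[of 3 1]] unfolding e4 .
  then have "vz 3 (pderiv qR) 1" unfolding pqR by (rule vz_smult)
  moreover have "poly qR 1 = 1" by (simp add: qR_def QQ_def poly_pcompose)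
  ultimately show ?thesis by (simp add: vz_Suc[of 3, simplified] pderiv_diff)
qed

lemma vz_qR2: "vz 4 qR 2"
proof -
  have "vz 3 ([:-2,1:]^4 * [:-1,1:]^4) 2"
    using vz_mult'[OF vz_pow[of 3 2]] unfolding e4 .
  then have "vz 3 (pderiv qR) 2" unfolding pqR by (subst mult.commute) (rule vz_smult)
  moreover have "poly qR 2 = 0" by (simp add: qR_def QQ_def poly_pcompose)
  ultimately show ?thesis by (simp add: vz_Suc[of 3, simplified])
qed



definition cc :: "nat \<Rightarrow> real" where "cc k = [15, -640, 3645, -6144, 3125] ! (k - 1)"
definition lin :: "nat \<Rightarrow> real poly" where "lin k = [:1 + 1/real k, -1/real k:]"
definition GR :: "real poly \<Rightarrow> real poly" where
  "GR f = (\<Sum>k\<in>{1..5}. smult (cc k) (pcompose f (lin k)))"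
definition PR :: "real poly \<Rightarrow> real poly" where "PR f = qR * GR f"
definition refl :: "real poly \<Rightarrow> real poly" where "refl p = pcompose p [:0,-1:]"
definition PL :: "real poly \<Rightarrow> real poly" where "PL f = refl (PR (refl f))"
definition extD :: "nat \<Rightarrow> real poly \<Rightarrow> real \<Rightarrow> real" where
  "extD m f = pw ((pderiv^^m) (PL f)) ((pderiv^^m) f) ((pderiv^^m) (PR f))"

lemma GR_deriv: "(pderiv^^m) (GR f) = (\<Sum>k\<in>{1..5}. smult (cc k * (-1/real k)^m) (pcompose ((pderiv^^m) f) (lin k)))"
  unfolding GR_def lin_def pderiv_funpow_sum pderiv_funpow_smult pderiv_pcompose_lin
  by (simp add: smult_smult)

lemma five: "{1..5::nat} = {1,2,3,4,5}" by auto

lemma cc_sum: "m \<le> 4 \<Longrightarrow> (\<Sum>k\<in>{1..5}. cc k * (-1/real k)^m) = 1"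
proof -
  assume "m \<le> 4"
  then have "m = 0 \<or> m = 1 \<or> m = 2 \<or> m = 3 \<or> m = 4" by auto
  then show ?thesis unfolding five by (auto simp: cc_def power_divide)
qed

lemma poly_lin1: "k \<ge> 1 \<Longrightarrow> poly (lin k) 1 = 1"
  by (simp add: lin_def)

lemma GR_at1: "m \<le> 4 \<Longrightarrow> poly ((pderiv^^m) (GR f)) 1 = poly ((pderiv^^m) f) 1"
proof -
  assume m: "m \<le> 4"
  have "poly ((pderiv^^m) (GR f)) 1 = (\<Sum>k\<in>{1..5}. cc k * (-1/real k)^m * poly ((pderiv^^m) f) 1)"
    unfolding GR_deriv poly_sum poly_smult poly_pcompose
    by (intro sum.cong refl) (simp add: poly_lin1)
  also have "\<dots> = poly ((pderiv^^m) f) 1"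
    using cc_sum[OF m] by (simp add: sum_distrib_right[symmetric])
  finally show ?thesis .
qed

lemma PR_1: "m \<le> 4 \<Longrightarrow> poly ((pderiv^^m) (PR f)) 1 = poly ((pderiv^^m) f) 1"
proof -
  assume m: "m \<le> 4"
  have g: "vz 4 (GR f - f) 1"
    unfolding vz_def pderiv_funpow_diff by (simp add: GR_at1)
  have e: "PR f - f = qR * (GR f - f) + (qR - 1) * f"
    unfolding PR_def by (simp add: algebra_simps)
  have "vz 4 (PR f - f) 1" unfolding e
    by (intro vz_add vz_mult vz_mult' g vz_qR1)
  then show ?thesis using m unfolding vz_def pderiv_funpow_diff by simp
qed

lemma PR_2: "m \<le> 4 \<Longrightarrow> poly ((pderiv^^m) (PR f)) 2 = 0"
proof -
  assume m: "m \<le> 4"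
  have "vz 4 (PR f) 2" unfolding PR_def by (intro vz_mult' vz_qR2)
  then show ?thesis using m unfolding vz_def by simp
qed

lemma refl_deriv: "(pderiv^^m) (refl p) = smult ((-1)^m) (refl ((pderiv^^m) p))"
  unfolding refl_def by (rule pderiv_pcompose_lin)

lemma poly_refl: "poly (refl p) x = poly p (-x)"
  by (simp add: refl_def poly_pcompose)

lemma PL_1: "m \<le> 4 \<Longrightarrow> poly ((pderiv^^m) (PL f)) (-1) = poly ((pderiv^^m) f) (-1)"
proof -
  assume m: "m \<le> 4"
  have "poly ((pderiv^^m) (PL f)) (-1) = (-1)^m * poly ((pderiv^^m) (PR (refl f))) 1"
    unfolding PL_def refl_deriv by (simp add: poly_refl)
  also have "\<dots> = (-1)^m * poly ((pderiv^^m) (refl f)) 1" using PR_1[OF m] by simp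
  also have "\<dots> = ((-1)^m * (-1)^m) * poly ((pderiv^^m) f) (-1)"
    unfolding refl_deriv by (simp add: poly_refl)
  also have "(-1::real)^m * (-1)^m = 1" by (simp add: power_mult_distrib[symmetric])
  finally show ?thesis by simp
qed

lemma PL_2: "m \<le> 4 \<Longrightarrow> poly ((pderiv^^m) (PL f)) (-2) = 0"
proof -
  assume m: "m \<le> 4"
  have "poly ((pderiv^^m) (PL f)) (-2) = (-1)^m * poly ((pderiv^^m) (PR (refl f))) 2"
    unfolding PL_def refl_deriv by (simp add: poly_refl)
  then show ?thesis using PR_2[OF m] by simp
qed

lemma matches_m: "m \<le> 4 \<Longrightarrow> matches ((pderiv^^m) (PL f)) ((pderiv^^m) f) ((pderiv^^m) (PR f))"
  unfolding matches_def using PL_1 PL_2 PR_1 PR_2 by auto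

lemma extD_deriv: "m < 4 \<Longrightarrow> (extD m f has_real_derivative extD (Suc m) f t) (at t)"
proof -
  assume m: "m < 4"
  have a: "matches ((pderiv^^m) (PL f)) ((pderiv^^m) f) ((pderiv^^m) (PR f))" using m matches_m by simp
  have b: "matches (pderiv ((pderiv^^m) (PL f))) (pderiv ((pderiv^^m) f)) (pderiv ((pderiv^^m) (PR f)))"
    using m matches_m[of "Suc m" f] by simp
  show ?thesis unfolding extD_def using pw_deriv[OF a b] by simp
qed

lemma extD_cont: "m \<le> 4 \<Longrightarrow> continuous_on UNIV (extD m f)"
  unfolding extD_def by (rule pw_cont[OF matches_m])

lemma extD_out: "2 < \<bar>t\<bar> \<Longrightarrow> extD m f t = 0"
  unfolding extD_def pw_def by auto

lemma extD_in: "m \<le> 4 \<Longrightarrow> -1 \<le> t \<Longrightarrow> t \<le> 1 \<Longrightarrow> extD m f t = poly ((pderiv^^m) f) t"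
  unfolding extD_def pw_def using PL_1[of m f] by auto

lemma poly_eqI': "(\<And>x. poly p x = poly q (x::real)) \<Longrightarrow> p = q"
  by (simp add: poly_eq_poly_eq_iff[symmetric] fun_eq_iff)

lemma GR_lin: "GR (\<Sum>j\<in>A. smult (b j) (f j)) = (\<Sum>j\<in>A. smult (b j) (GR (f j)))"
  apply (rule poly_eqI')
  apply (simp add: GR_def poly_sum poly_pcompose sum_distrib_left algebra_simps)
  apply (subst sum.swap, rule refl)
  done

lemma PR_lin: "PR (\<Sum>j\<in>A. smult (b j) (f j)) = (\<Sum>j\<in>A. smult (b j) (PR (f j)))"
  by (rule poly_eqI') (simp add: PR_def GR_lin poly_sum sum_distrib_left algebra_simps)

lemma refl_lin: "refl (\<Sum>j\<in>A. smult (b j) (f j)) = (\<Sum>j\<in>A. smult (b j) (refl (f j)))"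
  by (rule poly_eqI') (simp add: poly_refl poly_sum)

lemma PL_lin: "PL (\<Sum>j\<in>A. smult (b j) (f j)) = (\<Sum>j\<in>A. smult (b j) (PL (f j)))"
  by (simp add: PL_def refl_lin PR_lin)

lemma extD_lin: "extD m (\<Sum>j\<in>A. smult (b j) (f j)) t = (\<Sum>j\<in>A. b j * extD m (f j) t)"
  unfolding extD_def pw_def PL_lin PR_lin pderiv_funpow_sum pderiv_funpow_smult
  by (simp add: poly_sum)



lemma PR2_eq: "(pderiv^^2) (PR f) = (pderiv^^2) qR * GR f + 2 * (pderiv qR * pderiv (GR f)) + qR * (pderiv^^2) (GR f)"
  unfolding PR_def numeral_2_eq_2 by (simp add: pderiv_mult pderiv_add)

lemma PR4_eq: "(pderiv^^4) (PR f) = (pderiv^^4) qR * GR f + 4 * ((pderiv^^3) qR * pderiv (GR f))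
   + 6 * ((pderiv^^2) qR * (pderiv^^2) (GR f)) + 4 * (pderiv qR * (pderiv^^3) (GR f)) + qR * (pderiv^^4) (GR f)"
  unfolding PR_def by (simp add: pderiv_mult pderiv_add numeral_eq_Suc)

lemma sq5: "((a::real)+b+c+d+e)^2 \<le> 5*(a^2+b^2+c^2+d^2+e^2)"
proof -
  have "0 \<le> (a-b)^2 + (a-c)^2 + (a-d)^2 + (a-e)^2 + (b-c)^2 + (b-d)^2 + (b-e)^2 + (c-d)^2 + (c-e)^2 + (d-e)^2"
    by simp
  also have "\<dots> = 5*(a^2+b^2+c^2+d^2+e^2) - (a+b+c+d+e)^2"
    by (simp add: power2_eq_square algebra_simps)
  finally show ?thesis by simp
qed

lemma sq3: "((a::real)+b+c)^2 \<le> 3*(a^2+b^2+c^2)"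
proof -
  have "0 \<le> (a-b)^2 + (a-c)^2 + (b-c)^2" by simp
  also have "\<dots> = 3*(a^2+b^2+c^2) - (a+b+c)^2"
    by (simp add: power2_eq_square algebra_simps)
  finally show ?thesis by simp
qed

lemma cs_sum:
  fixes x :: "nat \<Rightarrow> real"
  assumes "finite A"
  shows "(\<Sum>k\<in>A. x k)^2 \<le> real (card A) * (\<Sum>k\<in>A. (x k)^2)"
proof -
  have "(\<Sum>k\<in>A. x k)^2 = (\<Sum>k\<in>A. \<Sum>l\<in>A. x k * x l)"
    by (simp add: power2_eq_square sum_product)
  also have "\<dots> \<le> (\<Sum>k\<in>A. \<Sum>l\<in>A. ((x k)^2 + (x l)^2) / 2)"
  proof (intro sum_mono)
    fix k l
    have "0 \<le> (x k - x l)^2" by simp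
    then show "x k * x l \<le> ((x k)^2 + (x l)^2) / 2" by (simp add: power2_eq_square algebra_simps)
  qed
  also have "\<dots> = real (card A) * (\<Sum>k\<in>A. (x k)^2)"
    by (simp add: sum.distrib add_divide_distrib sum_divide_distrib[symmetric] sum_distrib_left[symmetric]
        sum.swap[of "\<lambda>k l. (x l)^2"] mult.commute)
  finally show ?thesis .
qed

lemma int_c: "continuous_on {a..b} (f::real\<Rightarrow>real) \<Longrightarrow> f integrable_on {a..b}"
  by (rule integrable_continuous_real)



lemma abs_mult_le_sq: "\<bar>(x::real) * y\<bar> \<le> (x^2 + y^2) / 2"
proof -
  have "0 \<le> (\<bar>x\<bar> - \<bar>y\<bar>)^2" by simp
  then show ?thesis by (simp add: power2_eq_square algebra_simps abs_mult)
qed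

lemma ftc_poly: "a \<le> b \<Longrightarrow> integral {a..b} (poly (pderiv p)) = poly p b - poly p (a::real)"
proof -
  assume ab: "a \<le> b"
  have "(poly (pderiv p) has_integral (poly p b - poly p a)) {a..b}"
    by (rule fundamental_theorem_of_calculus[OF ab])
       (auto simp: has_real_derivative_iff_has_vector_derivative[symmetric]
             intro: has_field_derivative_at_within poly_DERIV)
  then show ?thesis by (rule integral_unique)
qed

lemma WL:
  fixes w h :: "real poly"
  assumes w1: "poly w 1 = 0" and w2: "poly w 2 = 0" and d1: "poly (pderiv w) 1 = 0" and d2: "poly (pderiv w) 2 = 0"
  and M1: "\<And>t. t \<in> {1..2} \<Longrightarrow> \<bar>poly w t\<bar> \<le> M"
  and M2: "\<And>t. t \<in> {1..2} \<Longrightarrow> \<bar>poly (pderiv (pderiv w)) t\<bar> \<le> M"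
  shows "integral {1..2} (\<lambda>t. poly w t * (poly (pderiv h) t)^2)
     \<le> M * (integral {1..2} (\<lambda>t. (poly h t)^2) + integral {1..2} (\<lambda>t. (poly (pderiv (pderiv h)) t)^2))"
proof -
  define Fp where "Fp = w * h * pderiv h - smult (1/2) (pderiv w * h^2)"
  define A where "A t = poly w t * (poly (pderiv h) t)^2" for t
  define B where "B t = poly w t * poly h t * poly (pderiv (pderiv h)) t" for t
  define C where "C t = poly (pderiv (pderiv w)) t * (poly h t)^2 / 2" for t
  have dF: "poly (pderiv Fp) t = A t + B t - C t" for t
    unfolding Fp_def A_def B_def C_def
    by (simp add: pderiv_mult pderiv_diff pderiv_smult power2_eq_square algebra_simps)
  have iA: "A integrable_on {1..2}" unfolding A_def by (intro int_c continuous_intros)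
  have iB: "B integrable_on {1..2}" unfolding B_def by (intro int_c continuous_intros)
  have iC: "C integrable_on {1..2}" unfolding C_def by (intro int_c continuous_intros) auto
  have "integral {1..2} (poly (pderiv Fp)) = 0"
    using ftc_poly[of 1 2 Fp] by (simp add: Fp_def w1 w2 d1 d2)
  then have "integral {1..2} (\<lambda>t. A t + B t - C t) = 0" unfolding dF[abs_def] by simp
  then have "integral {1..2} A + integral {1..2} B - integral {1..2} C = 0"
    using iA iB iC by (simp add: integral_diff integral_add integrable_add)
  then have eq: "integral {1..2} A = integral {1..2} (\<lambda>t. C t - B t)"
    using iB iC by (simp add: integral_diff)
  have M0: "0 \<le> M" using M1[of 1] by simp
  have "integral {1..2} (\<lambda>t. C t - B t) \<le> integral {1..2} (\<lambda>t. M * ((poly h t)^2 + (poly (pderiv (pderiv h)) t)^2))"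
  proof (rule integral_le)
    show "(\<lambda>t. C t - B t) integrable_on {1..2}" using iB iC by (intro integrable_diff)
    show "(\<lambda>t. M * ((poly h t)^2 + (poly (pderiv (pderiv h)) t)^2)) integrable_on {1..2}"
      by (intro int_c continuous_intros)
    fix t :: real assume t: "t \<in> {1..2}"
    define x where "x = poly h t"
    define y where "y = poly (pderiv (pderiv h)) t"
    have "C t \<le> M * x^2 / 2"
    proof -
      have "C t \<le> \<bar>poly (pderiv (pderiv w)) t\<bar> * x^2 / 2" unfolding C_def x_def
        by (intro divide_right_mono mult_right_mono) auto
      also have "\<dots> \<le> M * x^2 / 2" using M2[OF t] by (intro divide_right_mono mult_right_mono) auto
      finally show ?thesis .
    qed
    moreover have "- B t \<le> M * ((x^2 + y^2)/2)"
    proof -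
      have "- B t \<le> \<bar>poly w t\<bar> * \<bar>x * y\<bar>" unfolding B_def x_def y_def
        by (simp add: abs_mult) (metis abs_ge_minus_self abs_mult mult.assoc)
      also have "\<dots> \<le> M * ((x^2 + y^2)/2)"
        using M1[OF t] abs_mult_le_sq[of x y] M0 by (intro mult_mono) auto
      finally show ?thesis .
    qed
    moreover have "0 \<le> M * y^2" using M0 by simp
    ultimately show "C t - B t \<le> M * ((poly h t)^2 + (poly (pderiv (pderiv h)) t)^2)"
      unfolding x_def[symmetric] y_def[symmetric] by (simp add: algebra_simps)
  qed
  also have "\<dots> = M * (integral {1..2} (\<lambda>t. (poly h t)^2) + integral {1..2} (\<lambda>t. (poly (pderiv (pderiv h)) t)^2))"
  proof -
    have "integral {1..2} (\<lambda>t. (poly h t)^2 + (poly (pderiv (pderiv h)) t)^2) = integral {1..2} (\<lambda>t. (poly h t)^2) + integral {1..2} (\<lambda>t. (poly (pderiv (pderiv h)) t)^2)"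
      by (intro integral_add int_c continuous_intros)
    then show ?thesis by (subst integral_mult[symmetric]) (auto intro!: int_c continuous_intros)
  qed
  finally show ?thesis using eq unfolding A_def by simp
qed

lemma SUB:
  fixes g :: "real \<Rightarrow> real" and k :: real
  assumes gc: "continuous_on UNIV g" and g0: "\<And>x. g x \<ge> 0" and k: "k \<ge> 1"
  shows "integral {1..2} (\<lambda>t. g (1 + 1/k - t/k)) \<le> k * integral {-1..1} g"
proof -
  have gi: "\<And>a b. g integrable_on {a..b}" by (intro int_c continuous_on_subset[OF gc]) auto
  have "(g has_integral integral {1-1/k..1} g) (cbox (1-1/k) 1)"
    using gi by (simp add: integrable_integral)
  from has_integral_affinity[OF this, of "-1/k" "1 + 1/k"]
  have H: "((\<lambda>x. g ((-1/k) *\<^sub>R x + (1+1/k))) has_integral (1/\<bar>-1/k\<bar>^DIM(real)) *\<^sub>R integral {1-1/k..1} g)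
     ((\<lambda>x. (1/(-1/k)) *\<^sub>R x + -((1/(-1/k)) *\<^sub>R (1+1/k))) ` cbox (1-1/k) 1)"
    using k by simp
  have e1: "(\<lambda>x. g ((-1/k) *\<^sub>R x + (1+1/k))) = (\<lambda>t. g (1 + 1/k - t/k))"
    by (rule ext) (simp add: field_simps)
  have e2a: "(\<lambda>x. (1/(-1/k)) *\<^sub>R x + -((1/(-1/k)) *\<^sub>R (1+1/k))) = (\<lambda>x. (-k) * x + (k + 1))"
    using k by (intro ext) (simp add: field_simps)
  have e2: "(\<lambda>x. (1/(-1/k)) *\<^sub>R x + -((1/(-1/k)) *\<^sub>R (1+1/k))) ` cbox (1-1/k) 1 = {1..2}"
    unfolding e2a cbox_interval using k by (subst image_affinity_atLeastAtMost) (auto simp: field_simps)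
  have e3: "(1/\<bar>-1/k\<bar>^DIM(real)) *\<^sub>R integral {1-1/k..1} g = k * integral {1-1/k..1} g"
    using k by simp
  have "((\<lambda>t. g (1 + 1/k - t/k)) has_integral k * integral {1-1/k..1} g) {1..2}"
    using H unfolding e1 e2 e3 .
  then have "integral {1..2} (\<lambda>t. g (1 + 1/k - t/k)) = k * integral {1-1/k..1} g" by (rule integral_unique)
  also have "\<dots> \<le> k * integral {-1..1} g"
    using k g0 by (intro mult_left_mono integral_subset_le gi g0) (auto simp: divide_le_eq)
  finally show ?thesis .
qed

definition DD :: real where "DD = 5 * (\<Sum>k\<in>{1..5}. (cc k)^2 * real k)"

lemma poly_lin: "poly (lin k) t = 1 + 1/real k - t/real k"
  by (simp add: lin_def)

lemma GB:
  "integral {1..2} (\<lambda>t. (poly ((pderiv^^j) (GR f)) t)^2) \<le> DD * integral {-1..1} (\<lambda>x. (poly ((pderiv^^j) f) x)^2)"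
proof -
  define p where "p = (pderiv^^j) f"
  define y where "y k t = (poly p (1 + 1/real k - t/real k))^2" for k t
  have ev: "poly ((pderiv^^j) (GR f)) t = (\<Sum>k\<in>{1..5}. cc k * (-1/real k)^j * poly p (1 + 1/real k - t/real k))" for t
    unfolding GR_deriv poly_sum poly_smult poly_pcompose poly_lin p_def by simp
  have pt: "(poly ((pderiv^^j) (GR f)) t)^2 \<le> 5 * (\<Sum>k\<in>{1..5}. (cc k)^2 * y k t)" for t
  proof -
    have "(poly ((pderiv^^j) (GR f)) t)^2 \<le> real (card {1..5::nat}) * (\<Sum>k\<in>{1..5}. (cc k * (-1/real k)^j * poly p (1 + 1/real k - t/real k))^2)"
      unfolding ev by (rule cs_sum) simp
    also have "\<dots> \<le> 5 * (\<Sum>k\<in>{1..5}. (cc k)^2 * y k t)"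
    proof -
      have "(cc k * (-1/real k)^j * poly p (1 + 1/real k - t/real k))^2 \<le> (cc k)^2 * y k t" if "k \<in> {1..5}" for k
      proof -
        have "\<bar>-1/real k\<bar> \<le> 1" using that by simp
        then have "\<bar>(-1/real k)^j\<bar> \<le> 1" unfolding power_abs by (intro power_le_one) auto
        then have "((-1/real k)^j)^2 \<le> 1" by (simp add: abs_square_le_1)
        then show ?thesis unfolding y_def power_mult_distrib
          by (intro mult_right_mono) (auto intro: mult_left_le)
      qed
      then have "(\<Sum>k\<in>{1..5}. (cc k * (-1/real k)^j * poly p (1 + 1/real k - t/real k))^2) \<le> (\<Sum>k\<in>{1..5}. (cc k)^2 * y k t)"
        by (intro sum_mono) auto
      then show ?thesis by simp
    qed
    finally show ?thesis .
  qed
  have yc: "\<And>k. continuous_on UNIV (\<lambda>x. (poly p x)^2)" by (intro continuous_intros)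
  have yi: "\<And>k. k \<in> {1..5} \<Longrightarrow> (\<lambda>t. (cc k)^2 * y k t) integrable_on {1..2}" unfolding y_def by (intro int_c continuous_intros) auto
  have "integral {1..2} (\<lambda>t. (poly ((pderiv^^j) (GR f)) t)^2) \<le> integral {1..2} (\<lambda>t. 5 * (\<Sum>k\<in>{1..5}. (cc k)^2 * y k t))"
    using pt by (intro integral_le int_c continuous_intros) (auto simp: y_def intro!: continuous_intros)
  also have "\<dots> = 5 * (\<Sum>k\<in>{1..5}. (cc k)^2 * integral {1..2} (y k))"
  proof -
    have "integral {1..2} (\<lambda>t. (\<Sum>k\<in>{1..5}. (cc k)^2 * y k t)) = (\<Sum>k\<in>{1..5}. integral {1..2} (\<lambda>t. (cc k)^2 * y k t))"
      using yi by (intro integral_sum) auto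
    moreover have "(\<lambda>t. (\<Sum>k\<in>{1..5}. (cc k)^2 * y k t)) integrable_on {1..2}"
      using yi by (intro integrable_sum) auto
    ultimately show ?thesis by (subst integral_mult[symmetric]) auto
  qed
  also have "\<dots> \<le> 5 * (\<Sum>k\<in>{1..5}. (cc k)^2 * (real k * integral {-1..1} (\<lambda>x. (poly p x)^2)))"
  proof -
    have "integral {1..2} (y k) \<le> real k * integral {-1..1} (\<lambda>x. (poly p x)^2)" if "k \<in> {1..5}" for k
      unfolding y_def using that by (intro SUB) (auto intro!: continuous_intros)
    then show ?thesis by (intro mult_left_mono sum_mono) auto
  qed
  also have "\<dots> = DD * integral {-1..1} (\<lambda>x. (poly p x)^2)"
    by (simp add: DD_def sum_distrib_right mult.assoc)
  finally show ?thesis unfolding p_def .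
qed



lemma hi: "continuous_on UNIV f \<Longrightarrow> (f has_integral integral {a..b} f) {a..b::real}"
  for f :: "real \<Rightarrow> real"
  by (intro integrable_integral int_c) (auto intro: continuous_on_subset)

lemma qR_bound: "\<exists>B\<ge>0. \<forall>i\<le>6. \<forall>t\<in>{1..2}. \<bar>poly ((pderiv^^i) qR) t\<bar> \<le> B"
proof -
  define h where "h t = (\<Sum>i\<le>6. \<bar>poly ((pderiv^^i) qR) t\<bar>)" for t
  have "continuous_on {1..2} h" unfolding h_def by (intro continuous_intros)
  from continuous_attains_sup[OF compact_Icc _ this] obtain x where
    x: "x \<in> {1..2}" "\<forall>y\<in>{1..2}. h y \<le> h x" by auto
  have "\<bar>poly ((pderiv^^i) qR) t\<bar> \<le> h x" if "i \<le> 6" "t \<in> {1..2}" for i t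
  proof -
    have "\<bar>poly ((pderiv^^i) qR) t\<bar> \<le> h t" unfolding h_def
      using that by (intro member_le_sum) auto
    also have "\<dots> \<le> h x" using x that by auto
    finally show ?thesis .
  qed
  moreover have "0 \<le> h x" unfolding h_def by (intro sum_nonneg) auto
  ultimately show ?thesis by blast
qed

lemma pderiv_funpow_1: "(pderiv^^Suc m) (1::real poly) = 0"
  by (induction m) (auto simp: pderiv_funpow_0 funpow_Suc_right simp del: funpow.simps)

lemma dq_van: "1 \<le> i \<Longrightarrow> i \<le> 4 \<Longrightarrow> poly ((pderiv^^i) qR) 1 = 0 \<and> poly ((pderiv^^i) qR) 2 = 0"
proof -
  assume i: "1 \<le> i" "i \<le> 4"
  then obtain m where m: "i = Suc m" by (cases i) auto
  have "poly ((pderiv^^i) (qR - 1)) 1 = 0" using vz_qR1 i unfolding vz_def by auto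
  then have a: "poly ((pderiv^^i) qR) 1 = 0" unfolding pderiv_funpow_diff m pderiv_funpow_1 by simp
  have "poly ((pderiv^^i) qR) 2 = 0" using vz_qR2 i unfolding vz_def by auto
  with a show ?thesis by simp
qed

lemma WQ:
  assumes B: "\<forall>i\<le>6. \<forall>t\<in>{1..2}. \<bar>poly ((pderiv^^i) qR) t\<bar> \<le> B" and i: "i = 1 \<or> i = 3"
  shows "integral {1..2} (\<lambda>t. (poly ((pderiv^^i) qR) t)^2 * (poly (pderiv h) t)^2)
     \<le> (4*B^2) * (integral {1..2} (\<lambda>t. (poly h t)^2) + integral {1..2} (\<lambda>t. (poly (pderiv (pderiv h)) t)^2))"
proof -
  define p where "p = (pderiv^^i) qR"
  define w where "w = p^2"
  have p1: "poly p 1 = 0" and p2: "poly p 2 = 0" using dq_van[of i] i unfolding p_def by auto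
  have dw: "pderiv w = smult 2 (p * pderiv p)" unfolding w_def
    using pderiv_power_Suc[of p 1] by (simp add: numeral_2_eq_2)
  have ddw: "pderiv (pderiv w) = smult 2 (pderiv p * pderiv p + p * pderiv (pderiv p))"
    unfolding dw by (simp add: pderiv_mult pderiv_smult algebra_simps)
  have bp: "\<bar>poly p t\<bar> \<le> B" "\<bar>poly (pderiv p) t\<bar> \<le> B" "\<bar>poly (pderiv (pderiv p)) t\<bar> \<le> B"
    if "t \<in> {1..2}" for t
  proof -
    have "i \<le> 6" "Suc i \<le> 6" "Suc (Suc i) \<le> 6" using i by auto
    then have "\<bar>poly ((pderiv^^i) qR) t\<bar> \<le> B" "\<bar>poly ((pderiv^^Suc i) qR) t\<bar> \<le> B"
        "\<bar>poly ((pderiv^^Suc (Suc i)) qR) t\<bar> \<le> B"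
      using B that by blast+
    then show "\<bar>poly p t\<bar> \<le> B" "\<bar>poly (pderiv p) t\<bar> \<le> B" "\<bar>poly (pderiv (pderiv p)) t\<bar> \<le> B"
      unfolding p_def by simp_all
  qed
  have B0: "0 \<le> B" using bp(1)[of 1] by auto
  have "integral {1..2} (\<lambda>t. poly w t * (poly (pderiv h) t)^2)
     \<le> (4*B^2) * (integral {1..2} (\<lambda>t. (poly h t)^2) + integral {1..2} (\<lambda>t. (poly (pderiv (pderiv h)) t)^2))"
  proof (rule WL)
    show "poly w 1 = 0" "poly w 2 = 0" "poly (pderiv w) 1 = 0" "poly (pderiv w) 2 = 0"
      unfolding dw by (auto simp: w_def p1 p2)
    fix t :: real assume t: "t \<in> {1..2}"
    have "\<bar>poly w t\<bar> \<le> B^2"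
    proof -
      have "\<bar>(poly p t)^2\<bar> = \<bar>poly p t\<bar>^2" by simp
      also have "\<dots> \<le> B^2" using bp(1)[OF t] by (intro power_mono) auto
      finally show ?thesis unfolding w_def poly_power .
    qed
    then show "\<bar>poly w t\<bar> \<le> 4*B^2" by simp
    have "\<bar>poly (pderiv (pderiv w)) t\<bar> \<le> 2 * (\<bar>poly (pderiv p) t\<bar> * \<bar>poly (pderiv p) t\<bar> + \<bar>poly p t\<bar> * \<bar>poly (pderiv (pderiv p)) t\<bar>)"
    proof -
      have "\<bar>poly (pderiv (pderiv w)) t\<bar> = 2 * \<bar>poly (pderiv p) t * poly (pderiv p) t + poly p t * poly (pderiv (pderiv p)) t\<bar>"
        unfolding ddw by (simp only: poly_smult poly_add poly_mult abs_mult abs_numeral)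
      also have "\<dots> \<le> 2 * (\<bar>poly (pderiv p) t * poly (pderiv p) t\<bar> + \<bar>poly p t * poly (pderiv (pderiv p)) t\<bar>)"
        by (intro mult_left_mono abs_triangle_ineq) auto
      finally show ?thesis by (simp add: abs_mult)
    qed
    also have "\<dots> \<le> 2 * (B * B + B * B)"
      using bp[OF t] by (intro mult_left_mono add_mono mult_mono) auto
    finally show "\<bar>poly (pderiv (pderiv w)) t\<bar> \<le> 4*B^2" by (simp add: power2_eq_square)
  qed
  then show ?thesis unfolding w_def p_def poly_power .
qed

lemma DD_nonneg: "0 \<le> DD"
  unfolding DD_def by (intro mult_nonneg_nonneg sum_nonneg) auto

lemma IF_nonneg: "0 \<le> integral {a..b} (\<lambda>x. (poly p x)^2)" for a b :: real
  by (intro integral_nonneg int_c continuous_intros) auto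

lemma RP:
  fixes f :: "real poly"
  assumes B: "\<forall>i\<le>6. \<forall>t\<in>{1..2}. \<bar>poly ((pderiv^^i) qR) t\<bar> \<le> B"
  defines "IF \<equiv> \<lambda>j. integral {-1..1} (\<lambda>x. (poly ((pderiv^^j) f) x)^2)"
  shows "integral {1..2} (\<lambda>t. (poly (PR f) t)^2) \<le> B^2 * DD * IF 0"
    and "integral {1..2} (\<lambda>t. (poly ((pderiv^^2) (PR f)) t)^2) \<le> 1000 * B^2 * DD * (IF 0 + IF 2 + IF 4)"
    and "integral {1..2} (\<lambda>t. (poly ((pderiv^^4) (PR f)) t)^2) \<le> 1000 * B^2 * DD * (IF 0 + IF 2 + IF 4)"
proof -
  define G where "G = GR f"
  define g where "g j t = poly ((pderiv^^j) G) t" for j t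
  define q where "q i t = poly ((pderiv^^i) qR) t" for i t
  define IG where "IG j = integral {1..2} (\<lambda>t. (g j t)^2)" for j
  have GB': "IG j \<le> DD * IF j" for j unfolding IG_def g_def G_def IF_def by (rule GB)
  have IG0: "0 \<le> IG j" for j unfolding IG_def g_def by (rule IF_nonneg)
  have IF0: "0 \<le> IF j" for j unfolding IF_def by (rule IF_nonneg)
  have B0: "0 \<le> B" using B by force
  have qb: "(q i t)^2 \<le> B^2" if "i \<le> 6" "t \<in> {1..2}" for i t
  proof -
    have "(q i t)^2 = \<bar>q i t\<bar>^2" by simp
    also have "\<dots> \<le> B^2" using B that unfolding q_def by (intro power_mono) auto
    finally show ?thesis .
  qed
  have hG: "\<And>j. ((\<lambda>t. (g j t)^2) has_integral IG j) {1..2}"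
    unfolding IG_def g_def by (intro hi continuous_intros)
  have g1: "poly (pderiv G) = g 1" "poly (pderiv (pderiv G)) = g 2"
    "poly (pderiv ((pderiv^^2) G)) = g 3" "poly (pderiv (pderiv ((pderiv^^2) G))) = g 4"
    unfolding g_def by (auto simp: numeral_eq_Suc)
  have J3: "integral {1..2} (\<lambda>t. (q 3 t)^2 * (g 1 t)^2) \<le> 4*B^2 * (IG 0 + IG 2)"
    using WQ[OF B, of 3 G] unfolding g1 q_def IG_def by (simp add: g_def)
  have J1: "integral {1..2} (\<lambda>t. (q 1 t)^2 * (g 1 t)^2) \<le> 4*B^2 * (IG 0 + IG 2)"
    using WQ[OF B, of 1 G] unfolding g1 q_def IG_def by (simp add: g_def)
  have J1': "integral {1..2} (\<lambda>t. (q 1 t)^2 * (g 3 t)^2) \<le> 4*B^2 * (IG 2 + IG 4)"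
    using WQ[OF B, of 1 "(pderiv^^2) G"] unfolding g1 q_def IG_def by (simp add: g_def)
  have hJ: "\<And>i j. ((\<lambda>t. (q i t)^2 * (g j t)^2) has_integral integral {1..2} (\<lambda>t. (q i t)^2 * (g j t)^2)) {1..2}"
    unfolding q_def g_def by (intro hi continuous_intros)
  have "integral {1..2} (\<lambda>t. (poly (PR f) t)^2) \<le> integral {1..2} (\<lambda>t. B^2 * (g 0 t)^2)"
  proof (rule integral_le)
    show "(\<lambda>t. (poly (PR f) t)^2) integrable_on {1..2}" by (intro int_c continuous_intros)
    show "(\<lambda>t. B^2 * (g 0 t)^2) integrable_on {1..2}" unfolding g_def by (intro int_c continuous_intros)
    fix t :: real assume t: "t \<in> {1..2}"
    have "(poly (PR f) t)^2 = (q 0 t)^2 * (g 0 t)^2" unfolding PR_def q_def g_def G_def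
      by (simp add: power_mult_distrib)
    also have "\<dots> \<le> B^2 * (g 0 t)^2" using qb[of 0 t] t by (intro mult_right_mono) auto
    finally show "(poly (PR f) t)^2 \<le> B^2 * (g 0 t)^2" .
  qed
  also have "\<dots> = B^2 * IG 0" by (intro integral_unique has_integral_mult_right hG)
  also have "\<dots> \<le> B^2 * (DD * IF 0)" using GB' by (intro mult_left_mono) auto
  finally show "integral {1..2} (\<lambda>t. (poly (PR f) t)^2) \<le> B^2 * DD * IF 0" by (simp add: mult.assoc)
  have "integral {1..2} (\<lambda>t. (poly ((pderiv^^2) (PR f)) t)^2)
     \<le> integral {1..2} (\<lambda>t. 3 * (B^2 * (g 0 t)^2 + 4 * ((q 1 t)^2 * (g 1 t)^2) + B^2 * (g 2 t)^2))"
  proof (rule integral_le)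
    show "(\<lambda>t. (poly ((pderiv^^2) (PR f)) t)^2) integrable_on {1..2}" by (intro int_c continuous_intros)
    show "(\<lambda>t. 3 * (B^2 * (g 0 t)^2 + 4 * ((q 1 t)^2 * (g 1 t)^2) + B^2 * (g 2 t)^2)) integrable_on {1..2}"
      unfolding g_def q_def by (intro int_c continuous_intros)
    fix t :: real assume t: "t \<in> {1..2}"
    have ev2: "poly ((pderiv^^2) (PR f)) t = q 2 t * g 0 t + 2 * (q 1 t * g 1 t) + q 0 t * g 2 t"
      unfolding PR2_eq q_def g_def G_def by simp
    have "(poly ((pderiv^^2) (PR f)) t)^2 \<le> 3 * ((q 2 t * g 0 t)^2 + (2 * (q 1 t * g 1 t))^2 + (q 0 t * g 2 t)^2)"
      unfolding ev2 by (rule sq3)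
    also have "\<dots> \<le> 3 * (B^2 * (g 0 t)^2 + 4 * ((q 1 t)^2 * (g 1 t)^2) + B^2 * (g 2 t)^2)"
      using qb[of 2 t] qb[of 0 t] t
      by (intro mult_left_mono add_mono) (auto simp: power_mult_distrib intro!: mult_right_mono)
    finally show "(poly ((pderiv^^2) (PR f)) t)^2 \<le> 3 * (B^2 * (g 0 t)^2 + 4 * ((q 1 t)^2 * (g 1 t)^2) + B^2 * (g 2 t)^2)" .
  qed
  also have "\<dots> = 3 * (B^2 * IG 0 + 4 * integral {1..2} (\<lambda>t. (q 1 t)^2 * (g 1 t)^2) + B^2 * IG 2)"
    by (intro integral_unique has_integral_mult_right has_integral_add hG hJ)
  also have "\<dots> \<le> 3 * (B^2 * IG 0 + 4 * (4*B^2 * (IG 0 + IG 2)) + B^2 * IG 2)"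
    using J1 by (intro mult_left_mono add_mono) auto
  also have "\<dots> = 51 * B^2 * (IG 0 + IG 2)" by (simp add: algebra_simps)
  also have "\<dots> \<le> 51 * B^2 * (DD * IF 0 + DD * IF 2)" using GB' by (intro mult_left_mono add_mono) auto
  also have "\<dots> \<le> 1000 * B^2 * DD * (IF 0 + IF 2 + IF 4)"
    using IF0[of 0] IF0[of 2] IF0[of 4] DD_nonneg B0
    by (simp add: algebra_simps mult_right_mono mult_left_mono add_nonneg_nonneg mult_nonneg_nonneg)
  finally show "integral {1..2} (\<lambda>t. (poly ((pderiv^^2) (PR f)) t)^2) \<le> 1000 * B^2 * DD * (IF 0 + IF 2 + IF 4)" .
  have "integral {1..2} (\<lambda>t. (poly ((pderiv^^4) (PR f)) t)^2)
     \<le> integral {1..2} (\<lambda>t. 5 * (B^2 * (g 0 t)^2 + 16 * ((q 3 t)^2 * (g 1 t)^2) + 36 * B^2 * (g 2 t)^2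
           + 16 * ((q 1 t)^2 * (g 3 t)^2) + B^2 * (g 4 t)^2))"
  proof (rule integral_le)
    show "(\<lambda>t. (poly ((pderiv^^4) (PR f)) t)^2) integrable_on {1..2}" by (intro int_c continuous_intros)
    show "(\<lambda>t. 5 * (B^2 * (g 0 t)^2 + 16 * ((q 3 t)^2 * (g 1 t)^2) + 36 * B^2 * (g 2 t)^2
           + 16 * ((q 1 t)^2 * (g 3 t)^2) + B^2 * (g 4 t)^2)) integrable_on {1..2}"
      unfolding g_def q_def by (intro int_c continuous_intros)
    fix t :: real assume t: "t \<in> {1..2}"
    have ev4: "poly ((pderiv^^4) (PR f)) t = q 4 t * g 0 t + 4 * (q 3 t * g 1 t) + 6 * (q 2 t * g 2 t) + 4 * (q 1 t * g 3 t) + q 0 t * g 4 t"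
      unfolding PR4_eq q_def g_def G_def by simp
    have "(poly ((pderiv^^4) (PR f)) t)^2 \<le> 5 * ((q 4 t * g 0 t)^2 + (4 * (q 3 t * g 1 t))^2 + (6 * (q 2 t * g 2 t))^2
         + (4 * (q 1 t * g 3 t))^2 + (q 0 t * g 4 t)^2)"
      unfolding ev4 by (rule sq5)
    also have "\<dots> \<le> 5 * (B^2 * (g 0 t)^2 + 16 * ((q 3 t)^2 * (g 1 t)^2) + 36 * B^2 * (g 2 t)^2
           + 16 * ((q 1 t)^2 * (g 3 t)^2) + B^2 * (g 4 t)^2)"
      using qb[of 4 t] qb[of 2 t] qb[of 0 t] t
      by (intro mult_left_mono add_mono) (auto simp: power_mult_distrib intro!: mult_right_mono)
    finally show "(poly ((pderiv^^4) (PR f)) t)^2 \<le> 5 * (B^2 * (g 0 t)^2 + 16 * ((q 3 t)^2 * (g 1 t)^2) + 36 * B^2 * (g 2 t)^2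
           + 16 * ((q 1 t)^2 * (g 3 t)^2) + B^2 * (g 4 t)^2)" .
  qed
  also have "\<dots> = 5 * (B^2 * IG 0 + 16 * integral {1..2} (\<lambda>t. (q 3 t)^2 * (g 1 t)^2) + 36 * B^2 * IG 2
           + 16 * integral {1..2} (\<lambda>t. (q 1 t)^2 * (g 3 t)^2) + B^2 * IG 4)"
    by (intro integral_unique has_integral_mult_right has_integral_add hG hJ)
  also have "\<dots> \<le> 5 * (B^2 * IG 0 + 16 * (4*B^2 * (IG 0 + IG 2)) + 36 * B^2 * IG 2
           + 16 * (4*B^2 * (IG 2 + IG 4)) + B^2 * IG 4)"
    using J3 J1' by (intro mult_left_mono add_mono) auto
  also have "\<dots> \<le> 1000 * B^2 * (IG 0 + IG 2 + IG 4)"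
    using IG0[of 0] IG0[of 2] IG0[of 4] B0
    by (simp add: algebra_simps mult_right_mono mult_left_mono add_nonneg_nonneg mult_nonneg_nonneg)
  also have "\<dots> \<le> 1000 * B^2 * (DD * IF 0 + DD * IF 2 + DD * IF 4)" using GB' by (intro mult_left_mono add_mono) auto
  also have "\<dots> = 1000 * B^2 * DD * (IF 0 + IF 2 + IF 4)" by (simp add: algebra_simps)
  finally show "integral {1..2} (\<lambda>t. (poly ((pderiv^^4) (PR f)) t)^2) \<le> 1000 * B^2 * DD * (IF 0 + IF 2 + IF 4)" .
qed



definition IFn :: "nat \<Rightarrow> real poly \<Rightarrow> real" where
  "IFn j f = integral {-1..1} (\<lambda>x. (poly ((pderiv^^j) f) x)^2)"

lemma m1sq: "((-1::real)^j)^2 = 1"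
  by (simp add: power2_eq_square power_mult_distrib[symmetric])

lemma IFn_refl: "IFn j (refl f) = IFn j f"
proof -
  have "IFn j (refl f) = integral {-1..1} (\<lambda>x. (poly ((pderiv^^j) f) (-x))^2)"
    unfolding IFn_def refl_deriv by (simp add: poly_refl power_mult_distrib m1sq)
  also have "\<dots> = integral {-1..- (-1)} (\<lambda>x. (\<lambda>y. (poly ((pderiv^^j) f) y)^2) (-x))" by simp
  also have "\<dots> = IFn j f" unfolding IFn_def by (rule Henstock_Kurzweil_Integration.integral_reflect_real)
  finally show ?thesis .
qed

lemma extD_split:
  assumes m: "m \<le> 4"
  shows "integral {-2..2} (\<lambda>t. (extD m f t)^2) =
    integral {1..2} (\<lambda>t. (poly ((pderiv^^m) (PR (refl f))) t)^2) + IFn m f + integral {1..2} (\<lambda>t. (poly ((pderiv^^m) (PR f)) t)^2)"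
proof -
  have c: "continuous_on UNIV (\<lambda>t. (extD m f t)^2)" using extD_cont[OF m] by (intro continuous_intros)
  have i: "\<And>a b. (\<lambda>t. (extD m f t)^2) integrable_on {a..b}" by (intro int_c continuous_on_subset[OF c]) auto
  have "integral {-2..2} (\<lambda>t. (extD m f t)^2) = integral {-2..-1} (\<lambda>t. (extD m f t)^2) + integral {-1..2} (\<lambda>t. (extD m f t)^2)"
    by (rule Henstock_Kurzweil_Integration.integral_combine[symmetric]) (auto intro: i)
  also have "integral {-1..2} (\<lambda>t. (extD m f t)^2) = integral {-1..1} (\<lambda>t. (extD m f t)^2) + integral {1..2} (\<lambda>t. (extD m f t)^2)"
    by (rule Henstock_Kurzweil_Integration.integral_combine[symmetric]) (auto intro: i)
  also have "integral {-1..1} (\<lambda>t. (extD m f t)^2) = IFn m f"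
    unfolding IFn_def by (intro integral_cong) (auto simp: extD_in[OF m])
  also have "integral {1..2} (\<lambda>t. (extD m f t)^2) = integral {1..2} (\<lambda>t. (poly ((pderiv^^m) (PR f)) t)^2)"
    using PR_1[OF m, of f] by (intro integral_cong) (auto simp: extD_def pw_def)
  also have "integral {-2..-1} (\<lambda>t. (extD m f t)^2) = integral {-2..-1} (\<lambda>t. (poly ((pderiv^^m) (PR (refl f))) (-t))^2)"
    using PL_2[OF m, of f] by (intro integral_cong)
       (auto simp: extD_def pw_def PL_def refl_deriv poly_refl power_mult_distrib m1sq)
  also have "\<dots> = integral {1..2} (\<lambda>t. (poly ((pderiv^^m) (PR (refl f))) t)^2)"
    using Henstock_Kurzweil_Integration.integral_reflect_real[of 2 1 "\<lambda>t. (poly ((pderiv^^m) (PR (refl f))) t)^2"] by simp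
  finally show ?thesis by simp
qed

lemma oneD:
  "\<exists>C\<ge>0. \<forall>f. integral {-2..2} (\<lambda>t. (extD 0 f t)^2) \<le> C * IFn 0 f \<and>
      (\<forall>m\<in>{2,4}. integral {-2..2} (\<lambda>t. (extD m f t)^2) \<le> C * (IFn 0 f + IFn 2 f + IFn 4 f))"
proof -
  obtain B where B0: "B \<ge> 0" and B: "\<forall>i\<le>6. \<forall>t\<in>{1..2}. \<bar>poly ((pderiv^^i) qR) t\<bar> \<le> B"
    using qR_bound by blast
  define C where "C = 2000 * B^2 * DD + 1"
  have C0: "C \<ge> 0" unfolding C_def using DD_nonneg by simp
  have I0: "\<And>j f. 0 \<le> IFn j f" unfolding IFn_def by (rule IF_nonneg)
  note RPs = RP[OF B, folded IFn_def]
  have "integral {-2..2} (\<lambda>t. (extD 0 f t)^2) \<le> C * IFn 0 f" for f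
  proof -
    have "integral {-2..2} (\<lambda>t. (extD 0 f t)^2) \<le> B^2 * DD * IFn 0 (refl f) + IFn 0 f + B^2 * DD * IFn 0 f"
      unfolding extD_split[of 0, simplified] using RPs(1)[of "refl f"] RPs(1)[of f] by simp
    also have "\<dots> = (2 * B^2 * DD + 1) * IFn 0 f" by (simp add: IFn_refl algebra_simps)
    also have "\<dots> \<le> C * IFn 0 f" unfolding C_def using I0[of 0 f] DD_nonneg
      by (intro mult_right_mono) auto
    finally show ?thesis .
  qed
  moreover have "integral {-2..2} (\<lambda>t. (extD m f t)^2) \<le> C * (IFn 0 f + IFn 2 f + IFn 4 f)" if m: "m \<in> {2,4}" for m f
  proof -
    have m4: "m \<le> 4" using m by auto
    have r: "integral {1..2} (\<lambda>t. (poly ((pderiv^^m) (PR g)) t)^2) \<le> 1000 * B^2 * DD * (IFn 0 g + IFn 2 g + IFn 4 g)" for g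
      using m RPs(2)[of g] RPs(3)[of g] by auto
    have im: "IFn m f \<le> IFn 0 f + IFn 2 f + IFn 4 f" using m I0[of 0 f] I0[of 2 f] I0[of 4 f] by auto
    have "integral {-2..2} (\<lambda>t. (extD m f t)^2) \<le> 1000 * B^2 * DD * (IFn 0 f + IFn 2 f + IFn 4 f) + IFn m f + 1000 * B^2 * DD * (IFn 0 f + IFn 2 f + IFn 4 f)"
      unfolding extD_split[OF m4] using r[of "refl f", unfolded IFn_refl] r[of f] by linarith
    also have "\<dots> \<le> C * (IFn 0 f + IFn 2 f + IFn 4 f)" unfolding C_def using im by (simp add: algebra_simps)
    finally show ?thesis .
  qed
  ultimately show ?thesis using C0 by blast
qed

lemma lborel_HK:
  fixes h :: "real \<Rightarrow> real"
  assumes c: "continuous_on UNIV h" and z: "\<And>t. 2 < \<bar>t\<bar> \<Longrightarrow> h t = 0"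
  shows "(\<integral>x. h x \<partial>lborel) = integral {-2..2} h"
proof -
  have si: "set_integrable lborel {-2..2} h" unfolding set_integrable_def
    by (rule borel_integrable_compact) (auto intro: continuous_on_subset[OF c])
  have "(\<integral>x. h x \<partial>lborel) = (LINT x:{-2..2}|lborel. h x)"
    unfolding set_lebesgue_integral_def
  proof (intro Bochner_Integration.integral_cong refl)
    fix x show "h x = indicator {-2..2} x *\<^sub>R h x"
      using z[of x] by (cases "x \<in> {-2..2}") (auto simp: abs_if)
  qed
  also have "\<dots> = integral {-2..2} h" by (rule set_borel_integral_eq_integral(2)[OF si])
  finally show ?thesis .
qed

lemma lborel_Ioo:
  fixes h :: "real \<Rightarrow> real"
  assumes c: "continuous_on UNIV h"
  shows "(LINT x:{-1<..<1}|lborel. h x) = integral {-1..1} h"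
proof -
  have si: "set_integrable lborel {-1..1} h" unfolding set_integrable_def
    by (rule borel_integrable_compact) (auto intro: continuous_on_subset[OF c])
  then have "set_integrable lborel {-1<..<1} h" by (rule set_integrable_subset) auto
  then have "(LINT x:{-1<..<1}|lborel. h x) = integral {-1<..<1} h" by (rule set_borel_integral_eq_integral(2))
  then show ?thesis by (simp add: integral_open_interval_real)
qed



lemma dpar_van:
  assumes "\<And>z. R < norm z \<Longrightarrow> \<psi> z = 0" "R < norm z"
  shows "dpar d \<psi> z = 0"
proof -
  obtain x y where z: "z = (x, y)" by (cases z)
  show ?thesis
  proof (cases d)
    case True
    have "((\<lambda>t. \<psi> (t, y)) has_field_derivative 0) (at x)"
    proof (rule has_field_derivative_transform_within_open[of "\<lambda>t. 0" 0 x "{t. R < norm (t, y)}"])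
      show "open {t. R < norm (t, y)}" by (intro open_Collect_less continuous_intros)
    qed (use assms z in auto)
    then show ?thesis using True z by (simp add: dpar_def DERIV_imp_deriv)
  next
    case False
    have "((\<lambda>t. \<psi> (x, t)) has_field_derivative 0) (at y)"
    proof (rule has_field_derivative_transform_within_open[of "\<lambda>t. 0" 0 y "{t. R < norm (x, t)}"])
      show "open {t. R < norm (x, t)}" by (intro open_Collect_less continuous_intros)
    qed (use assms z in auto)
    then show ?thesis using False z by (simp add: dpar_def DERIV_imp_deriv)
  qed
qed

lemma dpars_van:
  assumes "\<And>z. R < norm z \<Longrightarrow> \<psi> z = 0" "R < norm z"
  shows "dpars ds \<psi> z = 0"
  using assms(2)
proof (induction ds arbitrary: z)
  case Nil then show ?case using assms(1) by simp
next
  case (Cons d ds) then show ?case by (simp add: dpar_van[of R "dpars ds \<psi>"])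
qed

lemma dpars_append: "dpars ds' (dpars ds \<phi>) = dpars (ds' @ ds) \<phi>"
  by (induction ds') auto

lemma test_fun_R: "test_fun \<phi> \<Longrightarrow> \<exists>R>0. \<forall>z. R < norm z \<longrightarrow> \<phi> z = 0"
proof -
  assume "test_fun \<phi>"
  then have "bounded {z. \<phi> z \<noteq> 0}" by (simp add: test_fun_def)
  then obtain R where R: "\<forall>z\<in>{z. \<phi> z \<noteq> 0}. norm z \<le> R" unfolding bounded_iff by blast
  have "\<forall>z. max R 1 < norm z \<longrightarrow> \<phi> z = 0" using R by force
  then show ?thesis by (intro exI[of _ "max R 1"]) auto
qed

lemma test_fun_dpars: "test_fun \<phi> \<Longrightarrow> test_fun (dpars ds \<phi>)"
proof -
  assume t: "test_fun \<phi>"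
  obtain R where R: "R > 0" "\<And>z. R < norm z \<Longrightarrow> \<phi> z = 0" using test_fun_R[OF t] by auto
  have "{z. dpars ds \<phi> z \<noteq> 0} \<subseteq> cball 0 R" using dpars_van[of R \<phi>] R by force
  then have "bounded {z. dpars ds \<phi> z \<noteq> 0}" using bounded_cball bounded_subset by blast
  then show ?thesis using t unfolding test_fun_def dpars_append by auto
qed

lemma int2:
  fixes G :: "real \<times> real \<Rightarrow> real"
  assumes "continuous_on UNIV G" "\<And>z. R < norm z \<Longrightarrow> G z = 0"
  shows "integrable lborel G"
proof -
  have "integrable lborel (\<lambda>z. indicator (cball 0 R) z *\<^sub>R G z)"
    by (rule borel_integrable_compact) (auto intro: continuous_on_subset[OF assms(1)])
  moreover have "(\<lambda>z. indicator (cball 0 R) z *\<^sub>R G z) = G"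
    using assms(2) by (auto simp: indicator_def fun_eq_iff)
  ultimately show ?thesis by simp
qed

lemma lborel_HK_R:
  fixes h :: "real \<Rightarrow> real"
  assumes c: "continuous_on UNIV h" and z: "\<And>t. R < \<bar>t\<bar> \<Longrightarrow> h t = 0"
  shows "(\<integral>x. h x \<partial>lborel) = integral {-R..R} h"
proof -
  have si: "set_integrable lborel {-R..R} h" unfolding set_integrable_def
    by (rule borel_integrable_compact) (auto intro: continuous_on_subset[OF c])
  have "(\<integral>x. h x \<partial>lborel) = (LINT x:{-R..R}|lborel. h x)"
    unfolding set_lebesgue_integral_def
  proof (intro Bochner_Integration.integral_cong refl)
    fix x show "h x = indicator {-R..R} x *\<^sub>R h x"
      using z[of x] by (cases "x \<in> {-R..R}") (auto simp: abs_if)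
  qed
  also have "\<dots> = integral {-R..R} h" by (rule set_borel_integral_eq_integral(2)[OF si])
  finally show ?thesis .
qed

lemma ibp1d:
  fixes f f' g g' :: "real \<Rightarrow> real"
  assumes df: "\<And>t. (f has_real_derivative f' t) (at t)" and cf': "continuous_on UNIV f'"
      and dg: "\<And>t. (g has_real_derivative g' t) (at t)" and cg': "continuous_on UNIV g'"
      and R: "R > 0" and gz: "\<And>t. R < \<bar>t\<bar> \<Longrightarrow> g t = 0 \<and> g' t = 0"
  shows "(\<integral>t. f t * g' t \<partial>lborel) = - (\<integral>t. f' t * g t \<partial>lborel)"
proof -
  have cf: "continuous_on UNIV f" using df by (intro DERIV_continuous_on) auto
  have cg: "continuous_on UNIV g" using dg by (intro DERIV_continuous_on) auto
  have c1: "continuous_on UNIV (\<lambda>t. f t * g' t)" using cf cg' by (rule continuous_on_mult)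
  have c2: "continuous_on UNIV (\<lambda>t. f' t * g t)" using cf' cg by (rule continuous_on_mult)
  have z1: "R + 1 < \<bar>t\<bar> \<Longrightarrow> f t * g' t = 0" for t using gz[of t] by simp
  have z2: "R + 1 < \<bar>t\<bar> \<Longrightarrow> f' t * g t = 0" for t using gz[of t] by simp
  have e1: "(\<integral>t. f t * g' t \<partial>lborel) = integral {-(R+1)..R+1} (\<lambda>t. f t * g' t)"
    by (rule lborel_HK_R[OF c1 z1])
  have e2: "(\<integral>t. f' t * g t \<partial>lborel) = integral {-(R+1)..R+1} (\<lambda>t. f' t * g t)"
    by (rule lborel_HK_R[OF c2 z2])
  have "((\<lambda>t. f' t * g t + f t * g' t) has_integral (f (R+1) * g (R+1) - f (-(R+1)) * g (-(R+1)))) {-(R+1)..R+1}"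
  proof (rule fundamental_theorem_of_calculus)
    show "- (R + 1) \<le> R + 1" using R by simp
    fix x :: real
    have "((\<lambda>t. f t * g t) has_real_derivative f' x * g x + g' x * f x) (at x)"
      by (rule DERIV_mult[OF df dg])
    moreover have "f' x * g x + g' x * f x = f' x * g x + f x * g' x" by (simp only: mult.commute)
    ultimately have "((\<lambda>t. f t * g t) has_real_derivative f' x * g x + f x * g' x) (at x within {-(R+1)..R+1})"
      by (metis has_field_derivative_at_within)
    then show "((\<lambda>t. f t * g t) has_vector_derivative f' x * g x + f x * g' x) (at x within {-(R+1)..R+1})"
      by (rule has_real_derivative_iff_has_vector_derivative[THEN iffD1])
  qed
  moreover have "g (R+1) = 0" "g (-(R+1)) = 0" using gz[of "R+1"] gz[of "-(R+1)"] R by auto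
  ultimately have "integral {-(R+1)..R+1} (\<lambda>t. f' t * g t + f t * g' t) = 0"
    by (metis (no_types, lifting) integral_unique mult_zero_right diff_self)
  moreover have "integral {-(R+1)..R+1} (\<lambda>t. f' t * g t + f t * g' t)
      = integral {-(R+1)..R+1} (\<lambda>t. f' t * g t) + integral {-(R+1)..R+1} (\<lambda>t. f t * g' t)"
  proof (rule Henstock_Kurzweil_Integration.integral_add)
    show "(\<lambda>t. f' t * g t) integrable_on {-(R+1)..R+1}"
      by (rule integrable_continuous_real, rule continuous_on_subset[OF c2], rule subset_UNIV)
    show "(\<lambda>t. f t * g' t) integrable_on {-(R+1)..R+1}"
      by (rule integrable_continuous_real, rule continuous_on_subset[OF c1], rule subset_UNIV)
  qed
  ultimately show ?thesis unfolding e1 e2 by linarith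
qed



lemma cfst: "continuous_on UNIV F \<Longrightarrow> continuous_on UNIV (\<lambda>z::real\<times>real. F (fst z))"
  by (rule continuous_on_compose2[of UNIV F UNIV fst]) (auto intro: continuous_intros)
lemma csnd: "continuous_on UNIV F \<Longrightarrow> continuous_on UNIV (\<lambda>z::real\<times>real. F (snd z))"
  by (rule continuous_on_compose2[of UNIV F UNIV snd]) (auto intro: continuous_intros)
lemma cx: "continuous_on UNIV G \<Longrightarrow> continuous_on UNIV (\<lambda>t. G (t, y::real))"
  by (rule continuous_on_compose2[of UNIV G UNIV "\<lambda>t. (t,y)"]) (auto intro: continuous_intros)
lemma cy: "continuous_on UNIV G \<Longrightarrow> continuous_on UNIV (\<lambda>t. G (x::real, t))"
  by (rule continuous_on_compose2[of UNIV G UNIV "\<lambda>t. (x,t)"]) (auto intro: continuous_intros)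

lemma fub_snd:
  fixes G :: "real \<times> real \<Rightarrow> real"
  assumes "integrable lborel G"
  shows "(\<integral>z. G z \<partial>lborel) = (\<integral>y. (\<integral>x. G (x, y) \<partial>lborel) \<partial>lborel)"
proof -
  have "integrable (lborel \<Otimes>\<^sub>M lborel) (case_prod (\<lambda>x y. G (x, y)))"
    using assms by (simp add: lborel_prod)
  from lborel_pair.integral_snd[OF this] show ?thesis by (simp add: lborel_prod)
qed

lemma fub_fst:
  fixes G :: "real \<times> real \<Rightarrow> real"
  assumes "integrable lborel G"
  shows "(\<integral>z. G z \<partial>lborel) = (\<integral>x. (\<integral>y. G (x, y) \<partial>lborel) \<partial>lborel)"
proof -
  have "integrable (lborel \<Otimes>\<^sub>M lborel) (case_prod (\<lambda>x y. G (x, y)))"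
    using assms by (simp add: lborel_prod)
  from lborel_pair.integral_fst[OF this] show ?thesis by (simp add: lborel_prod)
qed

lemma tf_props:
  assumes "test_fun \<psi>"
  shows "continuous_on UNIV \<psi>" "continuous_on UNIV (dpar d \<psi>)"
    "\<And>x y. ((\<lambda>t. \<psi> (t, y)) has_real_derivative dpar True \<psi> (x, y)) (at x)"
    "\<And>x y. ((\<lambda>t. \<psi> (x, t)) has_real_derivative dpar False \<psi> (x, y)) (at y)"
proof -
  have a: "continuous_on UNIV (dpars ds \<psi>)" for ds using assms by (simp add: test_fun_def)
  show "continuous_on UNIV \<psi>" using a[of "[]"] by simp
  show "continuous_on UNIV (dpar d \<psi>)" using a[of "[d]"] by simp
  fix x y
  have "\<forall>ds x y. (\<lambda>t. dpars ds \<psi> (t, y)) differentiable (at x) \<and> (\<lambda>t. dpars ds \<psi> (x, t)) differentiable (at y)"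
    using assms unfolding test_fun_def by blast
  then have "(\<lambda>t. dpars [] \<psi> (t, y)) differentiable (at x)" "(\<lambda>t. dpars [] \<psi> (x, t)) differentiable (at y)"
    by blast+
  then show "((\<lambda>t. \<psi> (t, y)) has_real_derivative dpar True \<psi> (x, y)) (at x)"
    "((\<lambda>t. \<psi> (x, t)) has_real_derivative dpar False \<psi> (x, y)) (at y)"
    by (simp_all add: dpar_def DERIV_deriv_iff_real_differentiable)
qed

lemma ibp2_x:
  fixes F F' H :: "real \<Rightarrow> real"
  assumes dF: "\<And>t. (F has_real_derivative F' t) (at t)" and cF': "continuous_on UNIV F'"
      and cH: "continuous_on UNIV H" and t\<psi>: "test_fun \<psi>"
  shows "(\<integral>z. F (fst z) * H (snd z) * dpar True \<psi> z \<partial>lborel) = - (\<integral>z. F' (fst z) * H (snd z) * \<psi> z \<partial>lborel)"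
proof -
  obtain R where R: "R > 0" "\<And>z. R < norm z \<Longrightarrow> \<psi> z = 0" using test_fun_R[OF t\<psi>] by auto
  have R': "\<And>z. R < norm z \<Longrightarrow> dpar True \<psi> z = 0" using dpar_van[of R \<psi>] R by auto
  note tp = tf_props[OF t\<psi>]
  have cF: "continuous_on UNIV F" using dF by (intro DERIV_continuous_on) auto
  have i1: "integrable lborel (\<lambda>z. F (fst z) * H (snd z) * dpar True \<psi> z)"
    by (rule int2[of _ R]) (auto intro!: continuous_intros cfst csnd cF cH tp(2) simp: R')
  have i2: "integrable lborel (\<lambda>z. F' (fst z) * H (snd z) * \<psi> z)"
    by (rule int2[of _ R]) (auto intro!: continuous_intros cfst csnd cF' cH tp(1) simp: R)
  have inner: "(\<integral>x. F x * H y * dpar True \<psi> (x, y) \<partial>lborel) = - (\<integral>x. F' x * H y * \<psi> (x, y) \<partial>lborel)" for y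
  proof -
    have "(\<integral>x. F x * dpar True \<psi> (x, y) \<partial>lborel) = - (\<integral>x. F' x * \<psi> (x, y) \<partial>lborel)"
    proof (rule ibp1d[OF dF cF' tp(3) cx[OF tp(2)] R(1)])
      fix t :: real assume "R < \<bar>t\<bar>"
      moreover have "\<bar>t\<bar> \<le> norm (t, y)" using norm_fst_le[of t y] by simp
      ultimately show "\<psi> (t, y) = 0 \<and> dpar True \<psi> (t, y) = 0" using R R' by auto
    qed
    moreover have "(\<integral>x. F x * H y * dpar True \<psi> (x, y) \<partial>lborel) = (\<integral>x. H y * (F x * dpar True \<psi> (x, y)) \<partial>lborel)"
      by (simp add: ac_simps)
    moreover have "(\<integral>x. F' x * H y * \<psi> (x, y) \<partial>lborel) = (\<integral>x. H y * (F' x * \<psi> (x, y)) \<partial>lborel)"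
      by (simp add: ac_simps)
    ultimately show ?thesis by (simp only: integral_mult_right_zero)
  qed
  have "(\<integral>z. F (fst z) * H (snd z) * dpar True \<psi> z \<partial>lborel) = (\<integral>y. (\<integral>x. F x * H y * dpar True \<psi> (x, y) \<partial>lborel) \<partial>lborel)"
    using fub_snd[OF i1] by simp
  also have "\<dots> = (\<integral>y. - (\<integral>x. F' x * H y * \<psi> (x, y) \<partial>lborel) \<partial>lborel)" by (simp only: inner)
  also have "\<dots> = - (\<integral>y. (\<integral>x. F' x * H y * \<psi> (x, y) \<partial>lborel) \<partial>lborel)" by simp
  also have "\<dots> = - (\<integral>z. F' (fst z) * H (snd z) * \<psi> z \<partial>lborel)"
    using fub_snd[OF i2] by simp
  finally show ?thesis .
qed

lemma ibp2_y:
  fixes F H H' :: "real \<Rightarrow> real"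
  assumes dH: "\<And>t. (H has_real_derivative H' t) (at t)" and cH': "continuous_on UNIV H'"
      and cF: "continuous_on UNIV F" and t\<psi>: "test_fun \<psi>"
  shows "(\<integral>z. F (fst z) * H (snd z) * dpar False \<psi> z \<partial>lborel) = - (\<integral>z. F (fst z) * H' (snd z) * \<psi> z \<partial>lborel)"
proof -
  obtain R where R: "R > 0" "\<And>z. R < norm z \<Longrightarrow> \<psi> z = 0" using test_fun_R[OF t\<psi>] by auto
  have R': "\<And>z. R < norm z \<Longrightarrow> dpar False \<psi> z = 0" using dpar_van[of R \<psi>] R by auto
  note tp = tf_props[OF t\<psi>]
  have cH: "continuous_on UNIV H" using dH by (intro DERIV_continuous_on) auto
  have i1: "integrable lborel (\<lambda>z. F (fst z) * H (snd z) * dpar False \<psi> z)"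
    by (rule int2[of _ R]) (auto intro!: continuous_intros cfst csnd cF cH tp(2) simp: R')
  have i2: "integrable lborel (\<lambda>z. F (fst z) * H' (snd z) * \<psi> z)"
    by (rule int2[of _ R]) (auto intro!: continuous_intros cfst csnd cF cH' tp(1) simp: R)
  have inner: "(\<integral>y. F x * H y * dpar False \<psi> (x, y) \<partial>lborel) = - (\<integral>y. F x * H' y * \<psi> (x, y) \<partial>lborel)" for x
  proof -
    have "(\<integral>y. H y * dpar False \<psi> (x, y) \<partial>lborel) = - (\<integral>y. H' y * \<psi> (x, y) \<partial>lborel)"
    proof (rule ibp1d[OF dH cH' tp(4) cy[OF tp(2)] R(1)])
      fix t :: real assume "R < \<bar>t\<bar>"
      moreover have "\<bar>t\<bar> \<le> norm (x, t)" using norm_snd_le[of t x] by simp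
      ultimately show "\<psi> (x, t) = 0 \<and> dpar False \<psi> (x, t) = 0" using R R' by auto
    qed
    moreover have "(\<integral>y. F x * H y * dpar False \<psi> (x, y) \<partial>lborel) = (\<integral>y. F x * (H y * dpar False \<psi> (x, y)) \<partial>lborel)"
      by (simp add: ac_simps)
    moreover have "(\<integral>y. F x * H' y * \<psi> (x, y) \<partial>lborel) = (\<integral>y. F x * (H' y * \<psi> (x, y)) \<partial>lborel)"
      by (simp add: ac_simps)
    ultimately show ?thesis by (simp only: integral_mult_right_zero)
  qed
  have "(\<integral>z. F (fst z) * H (snd z) * dpar False \<psi> z \<partial>lborel) = (\<integral>x. (\<integral>y. F x * H y * dpar False \<psi> (x, y) \<partial>lborel) \<partial>lborel)"
    using fub_fst[OF i1] by simp
  also have "\<dots> = (\<integral>x. - (\<integral>y. F x * H' y * \<psi> (x, y) \<partial>lborel) \<partial>lborel)" by (simp only: inner)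
  also have "\<dots> = - (\<integral>x. (\<integral>y. F x * H' y * \<psi> (x, y) \<partial>lborel) \<partial>lborel)" by simp
  also have "\<dots> = - (\<integral>z. F (fst z) * H' (snd z) * \<psi> z \<partial>lborel)"
    using fub_fst[OF i2] by simp
  finally show ?thesis .
qed



lemma weak_prod:
  fixes F H :: "nat \<Rightarrow> real \<Rightarrow> real"
  assumes dF: "\<And>m t. m < 4 \<Longrightarrow> (F m has_real_derivative F (Suc m) t) (at t)"
      and cF: "\<And>m. m \<le> 4 \<Longrightarrow> continuous_on UNIV (F m)"
      and dH: "\<And>m t. m < 4 \<Longrightarrow> (H m has_real_derivative H (Suc m) t) (at t)"
      and cH: "\<And>m. m \<le> 4 \<Longrightarrow> continuous_on UNIV (H m)"
      and t\<phi>: "test_fun \<phi>"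
  shows "length (filter (\<lambda>b. b) ds) + p \<le> 4 \<Longrightarrow> length (filter Not ds) + q \<le> 4 \<Longrightarrow>
    (\<integral>z. F p (fst z) * H q (snd z) * dpars ds \<phi> z \<partial>lborel) =
    (-1)^length ds * (\<integral>z. F (p + length (filter (\<lambda>b. b) ds)) (fst z) * H (q + length (filter Not ds)) (snd z) * \<phi> z \<partial>lborel)"
proof (induction ds arbitrary: p q)
  case Nil show ?case by simp
next
  case (Cons d ds)
  have t\<psi>: "test_fun (dpars ds \<phi>)" by (rule test_fun_dpars[OF t\<phi>])
  show ?case
  proof (cases d)
    case True
    have p: "p < 4" and pp: "length (filter (\<lambda>b. b) ds) + Suc p \<le> 4" and qq: "length (filter Not ds) + q \<le> 4"
      using Cons.prems True by auto
    have "(\<integral>z. F p (fst z) * H q (snd z) * dpars (d # ds) \<phi> z \<partial>lborel)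
        = (\<integral>z. F p (fst z) * H q (snd z) * dpar True (dpars ds \<phi>) z \<partial>lborel)" using True by simp
    also have "\<dots> = - (\<integral>z. F (Suc p) (fst z) * H q (snd z) * dpars ds \<phi> z \<partial>lborel)"
      by (rule ibp2_x[OF dF[OF p] _ _ t\<psi>]) (use p qq in \<open>auto intro: cF cH\<close>)
    also have "\<dots> = - ((-1)^length ds * (\<integral>z. F (Suc p + length (filter (\<lambda>b. b) ds)) (fst z) * H (q + length (filter Not ds)) (snd z) * \<phi> z \<partial>lborel))"
      using Cons.IH[OF pp qq] by simp
    finally show ?thesis using True by simp
  next
    case False
    have q: "q < 4" and pp: "length (filter (\<lambda>b. b) ds) + p \<le> 4" and qq: "length (filter Not ds) + Suc q \<le> 4"
      using Cons.prems False by auto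
    have "(\<integral>z. F p (fst z) * H q (snd z) * dpars (d # ds) \<phi> z \<partial>lborel)
        = (\<integral>z. F p (fst z) * H q (snd z) * dpar False (dpars ds \<phi>) z \<partial>lborel)" using False by simp
    also have "\<dots> = - (\<integral>z. F p (fst z) * H (Suc q) (snd z) * dpars ds \<phi> z \<partial>lborel)"
      by (rule ibp2_y[OF dH[OF q] _ _ t\<psi>]) (use q pp in \<open>auto intro: cF cH\<close>)
    also have "\<dots> = - ((-1)^length ds * (\<integral>z. F (p + length (filter (\<lambda>b. b) ds)) (fst z) * H (Suc q + length (filter Not ds)) (snd z) * \<phi> z \<partial>lborel))"
      using Cons.IH[OF pp qq] by simp
    finally show ?thesis using False by simp
  qed
qed

definition EE :: "nat \<Rightarrow> (nat \<Rightarrow> nat \<Rightarrow> real) \<Rightarrow> nat \<Rightarrow> nat \<Rightarrow> real \<times> real \<Rightarrow> real" where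
  "EE W a p q z = (\<Sum>i\<le>W. \<Sum>j\<le>W. a i j * (extD p (legendre i) (fst z) * extD q (legendre j) (snd z)))"

lemma EE_cont: "p \<le> 4 \<Longrightarrow> q \<le> 4 \<Longrightarrow> continuous_on UNIV (EE W a p q)"
  unfolding EE_def[abs_def]
  by (intro continuous_intros cfst csnd extD_cont) auto

lemma norm_le_sum: "norm (x::real, y::real) \<le> \<bar>x\<bar> + \<bar>y\<bar>"
proof -
  have "norm (x, y) = norm ((x, 0) + (0, y))" by simp
  also have "\<dots> \<le> norm (x, 0::real) + norm (0::real, y)" by (rule norm_triangle_ineq)
  finally show ?thesis by (simp add: norm_Pair)
qed

lemma EE_van: "4 < norm z \<Longrightarrow> EE W a p q z = 0"
proof -
  assume z: "4 < norm z"
  obtain x y where xy: "z = (x, y)" by (cases z)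
  have "2 < \<bar>x\<bar> \<or> 2 < \<bar>y\<bar>" using z norm_le_sum[of x y] xy by auto
  then show ?thesis unfolding EE_def xy using extD_out by auto
qed

lemma L2_cs:
  fixes G :: "real \<times> real \<Rightarrow> real"
  assumes "continuous_on UNIV G" "\<And>z. R < norm z \<Longrightarrow> G z = 0"
  shows "L2 G"
  unfolding L2_def
proof
  show "G \<in> borel_measurable lborel" using assms(1) by (simp add: borel_measurable_continuous_onI)
  show "integrable lborel (\<lambda>z. (G z)^2)"
    by (rule int2[of _ R]) (use assms in \<open>auto intro: continuous_intros\<close>)
qed

lemma EE_L2: "p \<le> 4 \<Longrightarrow> q \<le> 4 \<Longrightarrow> L2 (EE W a p q)"
  by (rule L2_cs[OF EE_cont EE_van])

lemma EE_weak:
  assumes t\<phi>: "test_fun \<phi>" and T: "length (filter (\<lambda>b. b) ds) \<le> 4" and F: "length (filter Not ds) \<le> 4"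
  shows "(\<integral>z. EE W a 0 0 z * dpars ds \<phi> z \<partial>lborel) =
     (-1)^length ds * (\<integral>z. EE W a (length (filter (\<lambda>b. b) ds)) (length (filter Not ds)) z * \<phi> z \<partial>lborel)"
proof -
  define nT where "nT = length (filter (\<lambda>b. b) ds)"
  define nF where "nF = length (filter Not ds)"
  obtain R where R: "R > 0" "\<And>z. R < norm z \<Longrightarrow> \<phi> z = 0" using test_fun_R[OF t\<phi>] by auto
  have Rd: "\<And>z. R < norm z \<Longrightarrow> dpars ds \<phi> z = 0" using dpars_van[of R \<phi>] R by auto
  have cd: "continuous_on UNIV (dpars ds \<phi>)" using t\<phi> by (simp add: test_fun_def)
  have c0: "continuous_on UNIV \<phi>" using t\<phi> tf_props by blast
  define T1 where "T1 i j z = extD 0 (legendre i) (fst z) * extD 0 (legendre j) (snd z) * dpars ds \<phi> z" for i j z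
  define T2 where "T2 i j z = extD nT (legendre i) (fst z) * extD nF (legendre j) (snd z) * \<phi> z" for i j z
  have i1: "integrable lborel (T1 i j)" for i j unfolding T1_def
    by (rule int2[of _ R]) (auto intro!: continuous_intros cfst csnd extD_cont cd simp: Rd)
  have i2: "integrable lborel (T2 i j)" for i j unfolding T2_def
    using T F unfolding nT_def[symmetric] nF_def[symmetric]
    by (intro int2[of _ R]) (auto intro!: continuous_intros cfst csnd extD_cont c0 simp: R)
  have wp: "(\<integral>z. T1 i j z \<partial>lborel) = (-1)^length ds * (\<integral>z. T2 i j z \<partial>lborel)" for i j
    unfolding T1_def T2_def nT_def nF_def
    using weak_prod[of "\<lambda>m. extD m (legendre i)" "\<lambda>m. extD m (legendre j)" \<phi> ds 0 0] T F t\<phi>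
    by (auto intro: extD_deriv extD_cont)
  have "(\<integral>z. EE W a 0 0 z * dpars ds \<phi> z \<partial>lborel) = (\<integral>z. (\<Sum>i\<le>W. \<Sum>j\<le>W. a i j * T1 i j z) \<partial>lborel)"
    unfolding EE_def T1_def by (intro Bochner_Integration.integral_cong refl) (simp add: sum_distrib_left sum_distrib_right ac_simps)
  also have "\<dots> = (\<Sum>i\<le>W. \<Sum>j\<le>W. a i j * (\<integral>z. T1 i j z \<partial>lborel))"
    using i1 by (simp add: Bochner_Integration.integral_sum integrable_sum)
  also have "\<dots> = (\<Sum>i\<le>W. \<Sum>j\<le>W. a i j * ((-1)^length ds * (\<integral>z. T2 i j z \<partial>lborel)))"
    by (simp add: wp)
  also have "\<dots> = (-1)^length ds * (\<Sum>i\<le>W. \<Sum>j\<le>W. a i j * (\<integral>z. T2 i j z \<partial>lborel))"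
    by (simp add: sum_distrib_left ac_simps)
  also have "(\<Sum>i\<le>W. \<Sum>j\<le>W. a i j * (\<integral>z. T2 i j z \<partial>lborel)) = (\<integral>z. (\<Sum>i\<le>W. \<Sum>j\<le>W. a i j * T2 i j z) \<partial>lborel)"
    using i2 by (simp add: Bochner_Integration.integral_sum integrable_sum)
  also have "(\<integral>z. (\<Sum>i\<le>W. \<Sum>j\<le>W. a i j * T2 i j z) \<partial>lborel) = (\<integral>z. EE W a nT nF z * \<phi> z \<partial>lborel)"
    unfolding EE_def T2_def by (intro Bochner_Integration.integral_cong refl) (simp add: sum_distrib_left sum_distrib_right ac_simps)
  finally show ?thesis unfolding nT_def nF_def .
qed

lemma EE_H4: "H4 (EE W a 0 0)"
  unfolding H4_def
proof (intro conjI allI impI)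
  show "L2 (EE W a 0 0)" by (rule EE_L2) auto
  fix ds :: "bool list" assume l: "length ds \<le> 4"
  have T: "length (filter (\<lambda>b. b) ds) \<le> 4" using l length_filter_le[of "\<lambda>b. b" ds] by linarith
  have F: "length (filter Not ds) \<le> 4" using l length_filter_le[of Not ds] by linarith
  show "\<exists>g. L2 g \<and> weak_pderiv ds (EE W a 0 0) g"
    using T F EE_weak[OF _ T F] EE_L2[OF T F] unfolding weak_pderiv_def by blast
qed



lemma oneDL:
  "\<exists>C\<ge>0. \<forall>f. (\<integral>t. (extD 0 f t)^2 \<partial>lborel) \<le> C * (LINT x:{-1<..<1}|lborel. (poly f x)^2) \<and>
      (\<forall>m\<in>{0,2,4}. (\<integral>t. (extD m f t)^2 \<partial>lborel) \<le>
         C * (LINT x:{-1<..<1}|lborel. (poly f x)^2 + (poly ((pderiv^^2) f) x)^2 + (poly ((pderiv^^4) f) x)^2))"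
proof -
  obtain C where C0: "C \<ge> 0" and C: "\<And>f. integral {-2..2} (\<lambda>t. (extD 0 f t)^2) \<le> C * IFn 0 f \<and>
      (\<forall>m\<in>{2,4}. integral {-2..2} (\<lambda>t. (extD m f t)^2) \<le> C * (IFn 0 f + IFn 2 f + IFn 4 f))"
    using oneD by blast
  have I0: "\<And>j f. 0 \<le> IFn j f" unfolding IFn_def by (rule IF_nonneg)
  have L: "(\<integral>t. (extD m f t)^2 \<partial>lborel) = integral {-2..2} (\<lambda>t. (extD m f t)^2)" if "m \<le> 4" for m f
    by (rule lborel_HK) (use that extD_out in \<open>auto intro!: continuous_intros extD_cont\<close>)
  have R0: "(LINT x:{-1<..<1}|lborel. (poly f x)^2) = IFn 0 f" for f
    unfolding IFn_def by (subst lborel_Ioo) (auto intro!: continuous_intros)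
  have R1: "(LINT x:{-1<..<1}|lborel. (poly f x)^2 + (poly ((pderiv^^2) f) x)^2 + (poly ((pderiv^^4) f) x)^2)
     = IFn 0 f + IFn 2 f + IFn 4 f" for f
  proof -
    have "(LINT x:{-1<..<1}|lborel. (poly f x)^2 + (poly ((pderiv^^2) f) x)^2 + (poly ((pderiv^^4) f) x)^2)
        = integral {-1..1} (\<lambda>x. (poly f x)^2 + (poly ((pderiv^^2) f) x)^2 + (poly ((pderiv^^4) f) x)^2)"
      by (subst lborel_Ioo) (auto intro!: continuous_intros)
    also have "\<dots> = IFn 0 f + IFn 2 f + IFn 4 f" unfolding IFn_def
      by (subst Henstock_Kurzweil_Integration.integral_add, (intro int_c continuous_intros)+)+ simp
    finally show ?thesis .
  qed
  show ?thesis
  proof (intro exI[of _ C] conjI allI ballI C0)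
    fix f
    show "(\<integral>t. (extD 0 f t)^2 \<partial>lborel) \<le> C * (LINT x:{-1<..<1}|lborel. (poly f x)^2)"
      using C[of f] unfolding L[of 0, simplified] R0 by simp
    fix m :: nat assume m: "m \<in> {0,2,4}"
    show "(\<integral>t. (extD m f t)^2 \<partial>lborel) \<le>
         C * (LINT x:{-1<..<1}|lborel. (poly f x)^2 + (poly ((pderiv^^2) f) x)^2 + (poly ((pderiv^^4) f) x)^2)"
    proof (cases "m = 0")
      case True
      have "C * IFn 0 f \<le> C * (IFn 0 f + IFn 2 f + IFn 4 f)" using C0 I0[of 2 f] I0[of 4 f]
        by (intro mult_left_mono) auto
      then show ?thesis using C[of f] unfolding True L[of 0, simplified] R1 by simp
    next
      case False
      then have "m \<in> {2,4}" "m \<le> 4" using m by auto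
      then show ?thesis using C[of f] unfolding L[OF \<open>m \<le> 4\<close>] R1 by auto
    qed
  qed
qed

definition PU :: "nat \<Rightarrow> (nat \<Rightarrow> nat \<Rightarrow> real) \<Rightarrow> nat \<Rightarrow> nat \<Rightarrow> real \<times> real \<Rightarrow> real" where
  "PU W a p q z = (\<Sum>i\<le>W. \<Sum>j\<le>W. a i j * poly ((pderiv^^p) (legendre i)) (fst z) * poly ((pderiv^^q) (legendre j)) (snd z))"

lemma leg_u_PU: "leg_u W a = PU W a 0 0"
  by (auto simp: leg_u_def PU_def fun_eq_iff)

lemma dpar_PU_T: "dpar True (PU W a p q) = PU W a (Suc p) q"
proof (intro ext)
  fix z :: "real \<times> real"
  obtain x y where z: "z = (x, y)" by (cases z)
  have "((\<lambda>t. PU W a p q (t, y)) has_real_derivative PU W a (Suc p) q (x, y)) (at x)"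
    unfolding PU_def fst_conv snd_conv funpow.simps o_apply
    by (intro DERIV_sum DERIV_cmult_right DERIV_cmult poly_DERIV)
  then show "dpar True (PU W a p q) z = PU W a (Suc p) q z"
    unfolding dpar_def z by (simp add: DERIV_imp_deriv)
qed

lemma dpar_PU_F: "dpar False (PU W a p q) = PU W a p (Suc q)"
proof (intro ext)
  fix z :: "real \<times> real"
  obtain x y where z: "z = (x, y)" by (cases z)
  have "((\<lambda>t. PU W a p q (x, t)) has_real_derivative PU W a p (Suc q) (x, y)) (at y)"
    unfolding PU_def fst_conv snd_conv funpow.simps o_apply
    by (intro DERIV_sum DERIV_cmult poly_DERIV)
  then show "dpar False (PU W a p q) z = PU W a p (Suc q) z"
    unfolding dpar_def z by (simp add: DERIV_imp_deriv)
qed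

lemma dpars_leg:
  "dpars ds (leg_u W a) = PU W a (length (filter (\<lambda>b. b) ds)) (length (filter Not ds))"
proof (induction ds)
  case Nil then show ?case by (simp add: leg_u_PU)
next
  case (Cons d ds) then show ?case by (cases d) (simp_all add: dpar_PU_T dpar_PU_F)
qed

lemma EE_S: "z \<in> S \<Longrightarrow> EE W a 0 0 z = leg_u W a z"
proof -
  assume "z \<in> S"
  then have "-1 \<le> fst z" "fst z \<le> 1" "-1 \<le> snd z" "snd z \<le> 1" by (auto simp: S_def)
  then show ?thesis
    by (simp add: EE_def leg_u_PU PU_def extD_in mult.assoc)
qed

lemma swap_int:
  fixes G :: "real \<times> real \<Rightarrow> real"
  assumes "integrable lborel G" "integrable lborel (\<lambda>z. G (snd z, fst z))"
  shows "(\<integral>z. G (snd z, fst z) \<partial>lborel) = (\<integral>z. G z \<partial>lborel)"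
  using fub_fst[OF assms(2)] fub_snd[OF assms(1)] by simp



lemma int_ind_cs:
  fixes g :: "'a::euclidean_space \<Rightarrow> real"
  assumes "continuous_on UNIV g" "compact K" "A \<in> sets lborel" "\<And>z. z \<in> A \<Longrightarrow> g z \<noteq> 0 \<Longrightarrow> z \<in> K"
  shows "integrable lborel (\<lambda>z. indicator A z * g z)"
proof -
  have "integrable lborel (\<lambda>z. indicator K z *\<^sub>R g z)"
    by (rule borel_integrable_compact[OF assms(2)]) (auto intro: continuous_on_subset[OF assms(1)])
  then have "integrable lborel (\<lambda>z. indicator A z *\<^sub>R (indicator K z *\<^sub>R g z))"
    by (rule integrable_mult_indicator[OF assms(3)])
  moreover have "(\<lambda>z. indicator A z *\<^sub>R (indicator K z *\<^sub>R g z)) = (\<lambda>z. indicator A z * g z)"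
  proof
    fix z show "indicator A z *\<^sub>R (indicator K z *\<^sub>R g z) = indicator A z * g z"
      using assms(4)[of z] by (cases "z \<in> A"; cases "z \<in> K") auto
  qed
  ultimately show ?thesis by simp
qed

lemma I_sets: "UNIV \<times> {-1<..<1::real} \<in> sets lborel" "{-1<..<1::real} \<times> UNIV \<in> sets lborel" "S \<in> sets lborel"
  by (auto simp: S_def intro!: borel_open open_Times)

lemma extD_poly_lin:
  "extD m (\<Sum>j\<le>W. smult (b j) (legendre j)) t = (\<Sum>j\<le>W. b j * extD m (legendre j) t)"
  by (rule extD_lin)

lemma int_fst:
  fixes G :: "real \<times> real \<Rightarrow> real"
  assumes "integrable lborel G"
  shows "integrable lborel (\<lambda>x. \<integral>y. G (x, y) \<partial>lborel)"
proof -
  have "integrable (lborel \<Otimes>\<^sub>M lborel) (case_prod (\<lambda>x y. G (x, y)))"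
    using assms by (simp add: lborel_prod)
  from lborel_pair.integrable_fst[OF this] show ?thesis by simp
qed

lemma int_snd:
  fixes G :: "real \<times> real \<Rightarrow> real"
  assumes "integrable lborel G"
  shows "integrable lborel (\<lambda>y. \<integral>x. G (x, y) \<partial>lborel)"
proof -
  have "integrable (lborel \<Otimes>\<^sub>M lborel) (case_prod (\<lambda>x y. G (x, y)))"
    using assms by (simp add: lborel_prod)
  from lborel_pair.integrable_snd[OF this] show ?thesis by simp
qed

lemma bound_x:
  fixes C :: real
  assumes C0: "C \<ge> 0"
    and C: "\<And>f m. m \<in> {0,2,4} \<Longrightarrow> (\<integral>t. (extD m f t)^2 \<partial>lborel) \<le>
         C * (LINT x:{-1<..<1}|lborel. (poly f x)^2 + (poly ((pderiv^^2) f) x)^2 + (poly ((pderiv^^4) f) x)^2)"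
    and C': "\<And>f. (\<integral>t. (extD 0 f t)^2 \<partial>lborel) \<le> C * (LINT x:{-1<..<1}|lborel. (poly f x)^2)"
    and p: "p \<in> {0,2,4}"
  shows "(\<integral>z. (EE W a p 0 z)^2 \<partial>lborel) \<le>
     C * (C * (LINT z:S|lborel. (PU W a 0 0 z)^2 + (PU W a 2 0 z)^2 + (PU W a 4 0 z)^2))"
proof -
  have p4: "p \<le> 4" using p by auto
  define I :: "real set" where "I = {-1<..<1}"
  define M where "M x y = (\<Sum>i\<le>W. \<Sum>j\<le>W. a i j * extD p (legendre i) x * poly (legendre j) y)" for x y
  define Pb where "Pb x = (\<Sum>j\<le>W. smult (\<Sum>i\<le>W. a i j * extD p (legendre i) x) (legendre j))" for x
  define Qy where "Qy y = (\<Sum>i\<le>W. smult (\<Sum>j\<le>W. a i j * poly (legendre j) y) (legendre i))" for y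
  define N where "N z = indicator (UNIV \<times> I) z * (M (fst z) (snd z))^2" for z
  define S3 where "S3 z = (PU W a 0 0 z)^2 + (PU W a 2 0 z)^2 + (PU W a 4 0 z)^2" for z
  define P where "P z = indicator S z * S3 z" for z
  have eqB: "EE W a p 0 (x, y) = extD 0 (Pb x) y" for x y
    unfolding Pb_def extD_poly_lin EE_def fst_conv snd_conv
    by (subst sum.swap) (simp add: sum_distrib_left sum_distrib_right ac_simps)
  have polyB: "poly (Pb x) y = M x y" for x y
    unfolding Pb_def M_def poly_sum poly_smult
    by (subst sum.swap) (simp add: sum_distrib_left sum_distrib_right ac_simps)
  have eqE: "extD p (Qy y) x = M x y" for x y
    unfolding Qy_def extD_poly_lin M_def by (simp add: sum_distrib_left sum_distrib_right ac_simps)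
  have polyE: "poly ((pderiv^^k) (Qy y)) x = PU W a k 0 (x, y)" for k x y
    unfolding Qy_def PU_def pderiv_funpow_sum pderiv_funpow_smult poly_sum poly_smult fst_conv snd_conv
    by (simp add: sum_distrib_left sum_distrib_right ac_simps)
  have cM: "continuous_on UNIV (\<lambda>z. (M (fst z) (snd z))^2)"
    unfolding M_def by (intro continuous_intros cfst extD_cont p4)
  have M0: "2 < \<bar>x\<bar> \<Longrightarrow> M x y = 0" for x y unfolding M_def by (simp add: extD_out)
  have iE: "integrable lborel (\<lambda>z. (EE W a p 0 z)^2)"
    by (rule int2[of _ 4]) (auto intro!: continuous_intros EE_cont p4 simp: EE_van)
  have iN: "integrable lborel N" unfolding N_def
  proof (rule int_ind_cs[OF cM _ _, of "{-2..2::real} \<times> {-1..1::real}"])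
    show "compact ({-2..2::real} \<times> {-1..1::real})" by (intro compact_Times compact_Icc)
    show "UNIV \<times> I \<in> sets lborel" unfolding I_def by (rule I_sets)
    fix z :: "real \<times> real" assume z: "z \<in> UNIV \<times> I" "(M (fst z) (snd z))^2 \<noteq> 0"
    then have "\<bar>fst z\<bar> \<le> 2" using M0 by force
    then show "z \<in> {-2..2} \<times> {-1..1}" using z unfolding I_def by (cases z) auto
  qed
  have cS3: "continuous_on UNIV S3" unfolding S3_def PU_def by (intro continuous_intros)
  have iP: "integrable lborel P" unfolding P_def
  proof (rule int_ind_cs[OF cS3 _ _, of "{-1..1::real} \<times> {-1..1::real}"])
    show "compact ({-1..1::real} \<times> {-1..1::real})" by (intro compact_Times compact_Icc)
    show "S \<in> sets lborel" by (rule I_sets)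
    fix z :: "real \<times> real" assume "z \<in> S"
    then show "z \<in> {-1..1} \<times> {-1..1}" by (auto simp: S_def)
  qed
  have N0: "0 \<le> N z" for z unfolding N_def by simp
  have P0: "0 \<le> P z" for z unfolding P_def S3_def by simp
  have stepB: "(\<integral>y. (EE W a p 0 (x, y))^2 \<partial>lborel) \<le> C * (\<integral>y. N (x, y) \<partial>lborel)" for x
  proof -
    have "(\<integral>y. (EE W a p 0 (x, y))^2 \<partial>lborel) = (\<integral>y. (extD 0 (Pb x) y)^2 \<partial>lborel)" unfolding eqB ..
    also have "\<dots> \<le> C * (LINT y:I|lborel. (poly (Pb x) y)^2)" unfolding I_def by (rule C')
    also have "(LINT y:I|lborel. (poly (Pb x) y)^2) = (\<integral>y. N (x, y) \<partial>lborel)"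
      unfolding set_lebesgue_integral_def N_def polyB by (simp add: indicator_def)
    finally show ?thesis .
  qed
  have stepE: "(\<integral>x. N (x, y) \<partial>lborel) \<le> C * (\<integral>x. P (x, y) \<partial>lborel)" for y
  proof (cases "y \<in> I")
    case False
    have "\<And>x. N (x, y) = 0" "\<And>x. P (x, y) = 0" using False by (auto simp: N_def P_def S_def I_def indicator_def)
    then show ?thesis by simp
  next
    case True
    have "(\<integral>x. N (x, y) \<partial>lborel) = (\<integral>x. (extD p (Qy y) x)^2 \<partial>lborel)"
      unfolding N_def eqE using True by (simp add: indicator_def)
    also have "\<dots> \<le> C * (LINT x:I|lborel. (poly (Qy y) x)^2 + (poly ((pderiv^^2) (Qy y)) x)^2 + (poly ((pderiv^^4) (Qy y)) x)^2)"
      unfolding I_def by (rule C[OF p])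
    also have "(LINT x:I|lborel. (poly (Qy y) x)^2 + (poly ((pderiv^^2) (Qy y)) x)^2 + (poly ((pderiv^^4) (Qy y)) x)^2)
        = (\<integral>x. P (x, y) \<partial>lborel)"
      unfolding set_lebesgue_integral_def P_def S3_def polyE[symmetric] using True
      by (intro Bochner_Integration.integral_cong refl) (auto simp: indicator_def S_def I_def)
    finally show ?thesis .
  qed
  have "(\<integral>z. (EE W a p 0 z)^2 \<partial>lborel) = (\<integral>x. (\<integral>y. (EE W a p 0 (x, y))^2 \<partial>lborel) \<partial>lborel)"
    using fub_fst[OF iE] by simp
  also have "\<dots> \<le> (\<integral>x. C * (\<integral>y. N (x, y) \<partial>lborel) \<partial>lborel)"
  proof (rule integral_mono')
    show "integrable lborel (\<lambda>x. C * (\<integral>y. N (x, y) \<partial>lborel))" using int_fst[OF iN] by simp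
    show "\<And>x. x \<in> space lborel \<Longrightarrow> (\<integral>y. (EE W a p 0 (x, y))^2 \<partial>lborel) \<le> C * (\<integral>y. N (x, y) \<partial>lborel)"
      using stepB by simp
    show "\<And>x. x \<in> space lborel \<Longrightarrow> 0 \<le> C * (\<integral>y. N (x, y) \<partial>lborel)"
      using C0 N0 by (simp add: integral_nonneg)
  qed
  also have "\<dots> = C * (\<integral>z. N z \<partial>lborel)" using fub_fst[OF iN] by simp
  also have "(\<integral>z. N z \<partial>lborel) = (\<integral>y. (\<integral>x. N (x, y) \<partial>lborel) \<partial>lborel)" using fub_snd[OF iN] by simp
  also have "\<dots> \<le> (\<integral>y. C * (\<integral>x. P (x, y) \<partial>lborel) \<partial>lborel)"
  proof (rule integral_mono')
    show "integrable lborel (\<lambda>y. C * (\<integral>x. P (x, y) \<partial>lborel))" using int_snd[OF iP] by simp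
    show "\<And>y. y \<in> space lborel \<Longrightarrow> (\<integral>x. N (x, y) \<partial>lborel) \<le> C * (\<integral>x. P (x, y) \<partial>lborel)"
      using stepE by simp
    show "\<And>y. y \<in> space lborel \<Longrightarrow> 0 \<le> C * (\<integral>x. P (x, y) \<partial>lborel)"
      using C0 P0 by (simp add: integral_nonneg)
  qed
  also have "\<dots> = C * (\<integral>z. P z \<partial>lborel)" using fub_snd[OF iP] by simp
  also have "(\<integral>z. P z \<partial>lborel) = (LINT z:S|lborel. (PU W a 0 0 z)^2 + (PU W a 2 0 z)^2 + (PU W a 4 0 z)^2)"
    unfolding set_lebesgue_integral_def P_def S3_def by simp
  finally show ?thesis using C0 by (simp add: mult_left_mono)
qed

lemma EE_swap: "EE W a 0 q (x, y) = EE W (\<lambda>i j. a j i) q 0 (y, x)"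
  unfolding EE_def fst_conv snd_conv by (subst sum.swap) (simp add: ac_simps)

lemma PU_swap: "PU W a 0 k (x, y) = PU W (\<lambda>i j. a j i) k 0 (y, x)"
  unfolding PU_def fst_conv snd_conv by (subst sum.swap) (simp add: ac_simps)

lemma bound_y:
  fixes C :: real
  assumes C0: "C \<ge> 0"
    and C: "\<And>f m. m \<in> {0,2,4} \<Longrightarrow> (\<integral>t. (extD m f t)^2 \<partial>lborel) \<le>
         C * (LINT x:{-1<..<1}|lborel. (poly f x)^2 + (poly ((pderiv^^2) f) x)^2 + (poly ((pderiv^^4) f) x)^2)"
    and C': "\<And>f. (\<integral>t. (extD 0 f t)^2 \<partial>lborel) \<le> C * (LINT x:{-1<..<1}|lborel. (poly f x)^2)"
    and q: "q \<in> {0,2,4}"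
  shows "(\<integral>z. (EE W a 0 q z)^2 \<partial>lborel) \<le>
     C * (C * (LINT z:S|lborel. (PU W a 0 0 z)^2 + (PU W a 0 2 z)^2 + (PU W a 0 4 z)^2))"
proof -
  define b where "b = (\<lambda>i j. a j i)"
  have q4: "q \<le> 4" using q by auto
  define G where "G z = (EE W b q 0 z)^2" for z
  define H where "H z = indicator S z * ((PU W b 0 0 z)^2 + (PU W b 2 0 z)^2 + (PU W b 4 0 z)^2)" for z
  have cG: "continuous_on UNIV G" unfolding G_def by (intro continuous_intros EE_cont q4) auto
  have iG: "integrable lborel G" by (rule int2[OF cG, of 4]) (simp add: G_def EE_van)
  have iG': "integrable lborel (\<lambda>z. G (snd z, fst z))"
  proof (rule int2[of _ 4])
    show "continuous_on UNIV (\<lambda>z::real\<times>real. G (snd z, fst z))"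
      by (rule continuous_on_compose2[OF cG]) (auto intro!: continuous_intros)
    fix z :: "real \<times> real" assume "4 < norm z"
    moreover have "norm (snd z, fst z) = norm z" by (cases z) (simp add: norm_Pair add.commute)
    ultimately show "G (snd z, fst z) = 0" by (simp add: G_def EE_van)
  qed
  have cH: "continuous_on UNIV (\<lambda>z. (PU W b 0 0 z)^2 + (PU W b 2 0 z)^2 + (PU W b 4 0 z)^2)"
    unfolding PU_def by (intro continuous_intros)
  have iH: "integrable lborel H" unfolding H_def
    by (rule int_ind_cs[OF cH _ I_sets(3), of "{-1..1::real} \<times> {-1..1::real}"])
       (auto intro: compact_Times simp: S_def)
  have cH': "continuous_on UNIV (\<lambda>z::real\<times>real. (PU W b 0 0 (snd z, fst z))^2 + (PU W b 2 0 (snd z, fst z))^2 + (PU W b 4 0 (snd z, fst z))^2)"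
    unfolding PU_def by (intro continuous_intros)
  have Sw: "indicator S (snd z, fst z) = (indicator S z :: real)" for z by (cases z) (auto simp: S_def indicator_def)
  have iH': "integrable lborel (\<lambda>z. H (snd z, fst z))" unfolding H_def Sw
    by (rule int_ind_cs[OF cH' _ I_sets(3), of "{-1..1::real} \<times> {-1..1::real}"])
       (auto intro: compact_Times simp: S_def)
  have "(\<integral>z. (EE W a 0 q z)^2 \<partial>lborel) = (\<integral>z. G (snd z, fst z) \<partial>lborel)"
    unfolding G_def b_def by (intro Bochner_Integration.integral_cong refl) (auto simp: EE_swap[of W a q] split: prod.splits)
  also have "\<dots> = (\<integral>z. G z \<partial>lborel)" by (rule swap_int[OF iG iG'])
  also have "\<dots> \<le> C * (C * (LINT z:S|lborel. (PU W b 0 0 z)^2 + (PU W b 2 0 z)^2 + (PU W b 4 0 z)^2))"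
    unfolding G_def by (rule bound_x[OF C0 C C' q])
  also have "(LINT z:S|lborel. (PU W b 0 0 z)^2 + (PU W b 2 0 z)^2 + (PU W b 4 0 z)^2) = (\<integral>z. H z \<partial>lborel)"
    unfolding set_lebesgue_integral_def H_def by simp
  also have "\<dots> = (\<integral>z. H (snd z, fst z) \<partial>lborel)" by (rule swap_int[OF iH iH', symmetric])
  also have "\<dots> = (LINT z:S|lborel. (PU W a 0 0 z)^2 + (PU W a 0 2 z)^2 + (PU W a 0 4 z)^2)"
    unfolding set_lebesgue_integral_def H_def Sw b_def
    by (intro Bochner_Integration.integral_cong refl) (auto simp: PU_swap[of W a] split: prod.splits)
  finally show ?thesis .
qed



theorem lemma2p1:
  shows "\<exists>K::real. \<forall>(W::nat) (a::nat \<Rightarrow> nat \<Rightarrow> real). W \<ge> 1 \<longrightarrow>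
     (\<exists>U. (\<forall>z\<in>S. U z = leg_u W a z) \<and> H4 U \<and>
        (\<exists>g4x g4y g2x g2y.
           weak_pderiv [True, True, True, True] U g4x \<and>
           weak_pderiv [False, False, False, False] U g4y \<and>
           weak_pderiv [True, True] U g2x \<and>
           weak_pderiv [False, False] U g2y \<and>
           (\<integral>z. (g4x z)\<^sup>2 + (g4y z)\<^sup>2 + (g2x z)\<^sup>2 + (g2y z)\<^sup>2 + (U z)\<^sup>2 \<partial>lborel)
             \<le> K * (\<integral>z\<in>S. (dpars [True, True, True, True] (leg_u W a) z)\<^sup>2
                        + (dpars [False, False, False, False] (leg_u W a) z)\<^sup>2
                        + (dpars [True, True] (leg_u W a) z)\<^sup>2
                        + (dpars [False, False] (leg_u W a) z)\<^sup>2
                        + (leg_u W a z)\<^sup>2 \<partial>lborel)))"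
proof -
  obtain C :: real where C0: "C \<ge> 0" and
    CC: "\<And>f. (\<integral>t. (extD 0 f t)^2 \<partial>lborel) \<le> C * (LINT x:{-1<..<1}|lborel. (poly f x)^2) \<and>
      (\<forall>m\<in>{0,2,4}. (\<integral>t. (extD m f t)^2 \<partial>lborel) \<le>
         C * (LINT x:{-1<..<1}|lborel. (poly f x)^2 + (poly ((pderiv^^2) f) x)^2 + (poly ((pderiv^^4) f) x)^2))"
    using oneDL by blast
  have C': "\<And>f. (\<integral>t. (extD 0 f t)^2 \<partial>lborel) \<le> C * (LINT x:{-1<..<1}|lborel. (poly f x)^2)" using CC by blast
  have C: "\<And>f m. m \<in> {0,2,4} \<Longrightarrow> (\<integral>t. (extD m f t)^2 \<partial>lborel) \<le>
         C * (LINT x:{-1<..<1}|lborel. (poly f x)^2 + (poly ((pderiv^^2) f) x)^2 + (poly ((pderiv^^4) f) x)^2)"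
    using CC by blast
  show ?thesis
  proof (intro exI[of _ "5 * C * C"] allI impI)
    fix W :: nat and a :: "nat \<Rightarrow> nat \<Rightarrow> real"
    define U where "U = EE W a 0 0"
    have wk: "weak_pderiv ds U (EE W a (length (filter (\<lambda>b. b) ds)) (length (filter Not ds)))"
      if "length (filter (\<lambda>b. b) ds) \<le> 4" "length (filter Not ds) \<le> 4" for ds
      unfolding weak_pderiv_def U_def using EE_weak[OF _ that] by blast
    define R5 where "R5 z = (PU W a 4 0 z)^2 + (PU W a 0 4 z)^2 + (PU W a 2 0 z)^2 + (PU W a 0 2 z)^2 + (PU W a 0 0 z)^2" for z
    define Sx where "Sx z = (PU W a 0 0 z)^2 + (PU W a 2 0 z)^2 + (PU W a 4 0 z)^2" for z
    define Sy where "Sy z = (PU W a 0 0 z)^2 + (PU W a 0 2 z)^2 + (PU W a 0 4 z)^2" for z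
    have iS: "integrable lborel (\<lambda>z. indicator S z * F z)" if "continuous_on UNIV F" for F :: "real \<times> real \<Rightarrow> real"
      by (rule int_ind_cs[OF that _ I_sets(3), of "{-1..1::real} \<times> {-1..1::real}"])
         (auto intro: compact_Times simp: S_def)
    have cR5: "continuous_on UNIV R5" unfolding R5_def PU_def by (intro continuous_intros)
    have cSx: "continuous_on UNIV Sx" unfolding Sx_def PU_def by (intro continuous_intros)
    have cSy: "continuous_on UNIV Sy" unfolding Sy_def PU_def by (intro continuous_intros)
    have ISx: "(LINT z:S|lborel. Sx z) \<le> (LINT z:S|lborel. R5 z)"
      unfolding set_lebesgue_integral_def using iS[OF cSx] iS[OF cR5]
      by (intro integral_mono) (auto simp: Sx_def R5_def indicator_def)
    have ISy: "(LINT z:S|lborel. Sy z) \<le> (LINT z:S|lborel. R5 z)"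
      unfolding set_lebesgue_integral_def using iS[OF cSy] iS[OF cR5]
      by (intro integral_mono) (auto simp: Sy_def R5_def indicator_def)
    have bx: "(\<integral>z. (EE W a p 0 z)^2 \<partial>lborel) \<le> C * (C * (LINT z:S|lborel. R5 z))" if "p \<in> {0,2,4}" for p
    proof -
      have "(\<integral>z. (EE W a p 0 z)^2 \<partial>lborel) \<le> C * (C * (LINT z:S|lborel. Sx z))"
        unfolding Sx_def by (rule bound_x[OF C0 C C' that])
      also have "\<dots> \<le> C * (C * (LINT z:S|lborel. R5 z))" using ISx C0 by (intro mult_left_mono) auto
      finally show ?thesis .
    qed
    have by': "(\<integral>z. (EE W a 0 q z)^2 \<partial>lborel) \<le> C * (C * (LINT z:S|lborel. R5 z))" if "q \<in> {0,2,4}" for q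
    proof -
      have "(\<integral>z. (EE W a 0 q z)^2 \<partial>lborel) \<le> C * (C * (LINT z:S|lborel. Sy z))"
        unfolding Sy_def by (rule bound_y[OF C0 C C' that])
      also have "\<dots> \<le> C * (C * (LINT z:S|lborel. R5 z))" using ISy C0 by (intro mult_left_mono) auto
      finally show ?thesis .
    qed
    have iE: "integrable lborel (\<lambda>z. (EE W a p q z)^2)" if "p \<le> 4" "q \<le> 4" for p q
      using EE_L2[OF that] unfolding L2_def by blast
    have "(\<integral>z. (EE W a 4 0 z)\<^sup>2 + (EE W a 0 4 z)\<^sup>2 + (EE W a 2 0 z)\<^sup>2 + (EE W a 0 2 z)\<^sup>2 + (EE W a 0 0 z)\<^sup>2 \<partial>lborel)
        = (\<integral>z. (EE W a 4 0 z)\<^sup>2 \<partial>lborel) + (\<integral>z. (EE W a 0 4 z)\<^sup>2 \<partial>lborel) + (\<integral>z. (EE W a 2 0 z)\<^sup>2 \<partial>lborel)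
          + (\<integral>z. (EE W a 0 2 z)\<^sup>2 \<partial>lborel) + (\<integral>z. (EE W a 0 0 z)\<^sup>2 \<partial>lborel)"
      by (simp add: iE)
    also have "\<dots> \<le> 5 * C * C * (LINT z:S|lborel. R5 z)"
      using bx[of 4] bx[of 2] bx[of 0] by'[of 4] by'[of 2] by (simp add: algebra_simps)
    also have "(LINT z:S|lborel. R5 z) = (\<integral>z\<in>S. (dpars [True, True, True, True] (leg_u W a) z)\<^sup>2
                        + (dpars [False, False, False, False] (leg_u W a) z)\<^sup>2
                        + (dpars [True, True] (leg_u W a) z)\<^sup>2
                        + (dpars [False, False] (leg_u W a) z)\<^sup>2
                        + (leg_u W a z)\<^sup>2 \<partial>lborel)"
      unfolding R5_def dpars_leg by (simp add: leg_u_PU numeral_eq_Suc)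
    finally have ineq: "(\<integral>z. (EE W a 4 0 z)\<^sup>2 + (EE W a 0 4 z)\<^sup>2 + (EE W a 2 0 z)\<^sup>2 + (EE W a 0 2 z)\<^sup>2 + (EE W a 0 0 z)\<^sup>2 \<partial>lborel)
      \<le> 5 * C * C * (\<integral>z\<in>S. (dpars [True, True, True, True] (leg_u W a) z)\<^sup>2
                        + (dpars [False, False, False, False] (leg_u W a) z)\<^sup>2
                        + (dpars [True, True] (leg_u W a) z)\<^sup>2
                        + (dpars [False, False] (leg_u W a) z)\<^sup>2
                        + (leg_u W a z)\<^sup>2 \<partial>lborel)" .
    show "\<exists>U. (\<forall>z\<in>S. U z = leg_u W a z) \<and> H4 U \<and>
        (\<exists>g4x g4y g2x g2y.
           weak_pderiv [True, True, True, True] U g4x \<and>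
           weak_pderiv [False, False, False, False] U g4y \<and>
           weak_pderiv [True, True] U g2x \<and>
           weak_pderiv [False, False] U g2y \<and>
           (\<integral>z. (g4x z)\<^sup>2 + (g4y z)\<^sup>2 + (g2x z)\<^sup>2 + (g2y z)\<^sup>2 + (U z)\<^sup>2 \<partial>lborel)
             \<le> 5 * C * C * (\<integral>z\<in>S. (dpars [True, True, True, True] (leg_u W a) z)\<^sup>2
                        + (dpars [False, False, False, False] (leg_u W a) z)\<^sup>2
                        + (dpars [True, True] (leg_u W a) z)\<^sup>2
                        + (dpars [False, False] (leg_u W a) z)\<^sup>2
                        + (leg_u W a z)\<^sup>2 \<partial>lborel))"
    proof (intro exI conjI)
      show "\<forall>z\<in>S. U z = leg_u W a z" unfolding U_def using EE_S by blast
      show "H4 U" unfolding U_def by (rule EE_H4)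
      show "weak_pderiv [True, True, True, True] U (EE W a 4 0)" using wk[of "[True, True, True, True]"] by (simp add: numeral_eq_Suc)
      show "weak_pderiv [False, False, False, False] U (EE W a 0 4)" using wk[of "[False, False, False, False]"] by (simp add: numeral_eq_Suc)
      show "weak_pderiv [True, True] U (EE W a 2 0)" using wk[of "[True, True]"] by (simp add: numeral_eq_Suc)
      show "weak_pderiv [False, False] U (EE W a 0 2)" using wk[of "[False, False]"] by (simp add: numeral_eq_Suc)
      show "(\<integral>z. (EE W a 4 0 z)\<^sup>2 + (EE W a 0 4 z)\<^sup>2 + (EE W a 2 0 z)\<^sup>2 + (EE W a 0 2 z)\<^sup>2 + (U z)\<^sup>2 \<partial>lborel)
             \<le> 5 * C * C * (\<integral>z\<in>S. (dpars [True, True, True, True] (leg_u W a) z)\<^sup>2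
                        + (dpars [False, False, False, False] (leg_u W a) z)\<^sup>2
                        + (dpars [True, True] (leg_u W a) z)\<^sup>2
                        + (dpars [False, False] (leg_u W a) z)\<^sup>2
                        + (leg_u W a z)\<^sup>2 \<partial>lborel)"
        using ineq unfolding U_def .
    qed
  qed
qed


end
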